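(* For every $d\in\mathbb{N}$ there is a constant $C_d>0$ depending only on $d$ such that the following holds. Let $p\ge1$, let $n>16d^2$, let $X\sim\mathrm{Uniform}(B_{p,n})$, and let $f:\mathbb{R}^n\to\mathbb{R}$ be a homogeneous polynomial of degree $d$. Then \[\mathbb{E}[f^2(X)]\ge C_d\,n^{-2d/p}\,\mathrm{coeff}_d^2(f).\]
   Context: $B_{p,n}=\{x\in\mathbb{R}^n:\|x\|_p\le1\}$ with $\|x\|_p=(\sum_i|x_i|^p)^{1/p}$ (the non-normalized unit $L_p$ ball). For $f(x)=\sum_{|I|=d}\alpha_Ix^I$ in multi-index notation, $\mathrm{coeff}_d(f)=\sqrt{\sum_{|I|=d}\alpha_I^2}$. *)

theory Defs
  imports "HOL-Probability.Probability"
begin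

text \<open>Points of R^n are functions on {..<n} (extensional), with the product Lebesgue measure.\<close>
definition Rn_measure :: "nat \<Rightarrow> (nat \<Rightarrow> real) measure" where
  "Rn_measure n = (\<Pi>\<^sub>M i\<in>{..<n}. lborel)"

definition lp_norm :: "nat \<Rightarrow> real \<Rightarrow> (nat \<Rightarrow> real) \<Rightarrow> real" where
  "lp_norm n p x = (\<Sum>i<n. \<bar>x i\<bar> powr p) powr (1 / p)"

definition lp_ball :: "nat \<Rightarrow> real \<Rightarrow> (nat \<Rightarrow> real) set" where
  "lp_ball n p = {x \<in> space (Rn_measure n). lp_norm n p x \<le> 1}"

definition multi_idx :: "nat \<Rightarrow> nat \<Rightarrow> (nat \<Rightarrow> nat) set" where
  "multi_idx n d = {I. (\<forall>i\<ge>n. I i = 0) \<and> (\<Sum>i<n. I i) = d}"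

definition hom_poly :: "nat \<Rightarrow> nat \<Rightarrow> ((nat \<Rightarrow> nat) \<Rightarrow> real) \<Rightarrow> (nat \<Rightarrow> real) \<Rightarrow> real" where
  "hom_poly n d \<alpha> x = (\<Sum>I\<in>multi_idx n d. \<alpha> I * (\<Prod>i<n. x i ^ I i))"

definition coeff_d :: "nat \<Rightarrow> nat \<Rightarrow> ((nat \<Rightarrow> nat) \<Rightarrow> real) \<Rightarrow> real" where
  "coeff_d n d \<alpha> = sqrt (\<Sum>I\<in>multi_idx n d. (\<alpha> I)\<^sup>2)"

end

theory Submission
  imports Defs "HOL-Computational_Algebra.Fundamental_Theorem_Algebra"
begin

lemma nn_exp_abs_pow_finite:
  "(\<integral>\<^sup>+ y. ennreal (\<bar>y\<bar> ^ k * exp (- \<bar>y\<bar>)) \<partial>lborel) < \<infinity>"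
proof -
  have G: "(\<integral>\<^sup>+ t. ennreal (indicator {0..} t * t powr (real k + 1 - 1) / exp t) \<partial>lborel) = ennreal (Gamma (real k + 1))"
    using Gamma_conv_nn_integral_real[of "real k + 1"] by simp
  have e1: "(\<integral>\<^sup>+ t. ennreal (indicator {0..} t * t powr (real k + 1 - 1) / exp t) \<partial>lborel)
        = (\<integral>\<^sup>+ t. ennreal (indicator {0..} t * (\<bar>t\<bar> ^ k * exp (- \<bar>t\<bar>))) \<partial>lborel)"
    by (intro nn_integral_cong_AE, use AE_lborel_singleton[of 0] in eventually_elim)
       (auto simp: indicator_def powr_realpow exp_minus field_simps)
  have e2: "(\<integral>\<^sup>+ t. ennreal (indicator {..0} t * (\<bar>t\<bar> ^ k * exp (- \<bar>t\<bar>))) \<partial>lborel)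
        = (\<integral>\<^sup>+ t. ennreal (indicator {0..} t * (\<bar>t\<bar> ^ k * exp (- \<bar>t\<bar>))) \<partial>lborel)"
    using nn_integral_real_affine[of "\<lambda>t. ennreal (indicator {..0} t * (\<bar>t\<bar> ^ k * exp (- \<bar>t\<bar>)))" "-1" 0]
    by (simp add: indicator_def)
  have "(\<integral>\<^sup>+ y. ennreal (\<bar>y\<bar> ^ k * exp (- \<bar>y\<bar>)) \<partial>lborel) \<le>
     (\<integral>\<^sup>+ t. ennreal (indicator {..0} t * (\<bar>t\<bar> ^ k * exp (- \<bar>t\<bar>))) + ennreal (indicator {0..} t * (\<bar>t\<bar> ^ k * exp (- \<bar>t\<bar>))) \<partial>lborel)"
    by (intro nn_integral_mono) (auto simp: indicator_def simp flip: ennreal_plus)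
  also have "\<dots> = ennreal (Gamma (real k + 1)) + ennreal (Gamma (real k + 1))"
    by (subst nn_integral_add) (use G in \<open>auto simp: e2 e1[symmetric]\<close>)
  finally show ?thesis by (simp add: le_less_trans flip: ennreal_plus)
qed

lemma poly_map_of_real: "poly (map_poly complex_of_real q) (of_real y) = of_real (poly q y)"
  by (induction q) (auto simp: map_poly_pCons)

lemma monic_abs_lower:
  fixes q :: "real poly"
  assumes "lead_coeff q = 1"
  obtains r :: "nat \<Rightarrow> real" where
    "\<And>y. (\<Prod>i<degree q. \<bar>y - r i\<bar>) \<le> \<bar>poly q y\<bar>"
proof -
  let ?Q = "map_poly complex_of_real q"
  have lc: "lead_coeff ?Q = 1" using assms by (simp add: lead_coeff_map_poly_nz)
  have dg: "degree ?Q = degree q" by (simp add: degree_map_poly)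
  obtain root where R: "smult (lead_coeff ?Q) (\<Prod>i<degree ?Q. [:-root i, 1:]) = ?Q"
    by (rule complex_poly_decompose')
  have "\<And>y. (\<Prod>i<degree q. \<bar>y - Re (root i)\<bar>) \<le> \<bar>poly q y\<bar>"
  proof -
    fix y :: real
    have "complex_of_real (poly q y) = poly ?Q (of_real y)" by (simp add: poly_map_of_real)
    also have "\<dots> = (\<Prod>i<degree q. (of_real y - root i))"
      using lc dg by (subst R[symmetric]) (simp add: poly_prod)
    finally have "\<bar>poly q y\<bar> = (\<Prod>i<degree q. cmod (of_real y - root i))"
      by (metis norm_of_real prod_norm)
    moreover have "\<bar>y - Re (root i)\<bar> \<le> cmod (of_real y - root i)" for i
      using abs_Re_le_cmod[of "of_real y - root i"] by simp
    ultimately show "(\<Prod>i<degree q. \<bar>y - Re (root i)\<bar>) \<le> \<bar>poly q y\<bar>"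
      by (simp add: prod_mono)
  qed
  then show ?thesis by (rule that)
qed

lemma nn_exp_abs_pow_le:
  "(\<integral>\<^sup>+ y. ennreal (\<bar>y\<bar> ^ k * exp (- \<bar>y\<bar>)) \<partial>lborel) \<le> ennreal (2 * Gamma (real k + 1))"
proof -
  have G: "(\<integral>\<^sup>+ t. ennreal (indicator {0..} t * t powr (real k + 1 - 1) / exp t) \<partial>lborel) = ennreal (Gamma (real k + 1))"
    using Gamma_conv_nn_integral_real[of "real k + 1"] by simp
  have e1: "(\<integral>\<^sup>+ t. ennreal (indicator {0..} t * t powr (real k + 1 - 1) / exp t) \<partial>lborel)
        = (\<integral>\<^sup>+ t. ennreal (indicator {0..} t * (\<bar>t\<bar> ^ k * exp (- \<bar>t\<bar>))) \<partial>lborel)"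
    by (intro nn_integral_cong_AE, use AE_lborel_singleton[of 0] in eventually_elim)
       (auto simp: indicator_def powr_realpow exp_minus field_simps)
  have e2: "(\<integral>\<^sup>+ t. ennreal (indicator {..0} t * (\<bar>t\<bar> ^ k * exp (- \<bar>t\<bar>))) \<partial>lborel)
        = (\<integral>\<^sup>+ t. ennreal (indicator {0..} t * (\<bar>t\<bar> ^ k * exp (- \<bar>t\<bar>))) \<partial>lborel)"
    using nn_integral_real_affine[of "\<lambda>t. ennreal (indicator {..0} t * (\<bar>t\<bar> ^ k * exp (- \<bar>t\<bar>)))" "-1" 0]
    by (simp add: indicator_def)
  have "(\<integral>\<^sup>+ y. ennreal (\<bar>y\<bar> ^ k * exp (- \<bar>y\<bar>)) \<partial>lborel) \<le>
     (\<integral>\<^sup>+ t. ennreal (indicator {..0} t * (\<bar>t\<bar> ^ k * exp (- \<bar>t\<bar>))) + ennreal (indicator {0..} t * (\<bar>t\<bar> ^ k * exp (- \<bar>t\<bar>))) \<partial>lborel)"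
    by (intro nn_integral_mono) (auto simp: indicator_def simp flip: ennreal_plus)
  also have "\<dots> = ennreal (Gamma (real k + 1)) + ennreal (Gamma (real k + 1))"
    by (subst nn_integral_add) (use G in \<open>auto simp: e2 e1[symmetric]\<close>)
  finally show ?thesis by (simp flip: ennreal_plus)
qed

lemma mom_nn_le:
  assumes p: "p \<ge> 1"
  shows "(\<integral>\<^sup>+ y. ennreal (\<bar>y\<bar> ^ k * exp (- (\<bar>y\<bar> powr p))) \<partial>lborel) \<le> ennreal (2 + 2 * Gamma (real k + 1))"
proof -
  have pt: "\<bar>y\<bar> ^ k * exp (- (\<bar>y\<bar> powr p)) \<le> indicator {-1..1} y + \<bar>y\<bar> ^ k * exp (- \<bar>y\<bar>)" for y :: real
  proof (cases "\<bar>y\<bar> \<le> 1")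
    case True
    have "\<bar>y\<bar> ^ k \<le> 1" using True by (simp add: power_le_one)
    moreover have "exp (- (\<bar>y\<bar> powr p)) \<le> 1" by simp
    ultimately have "\<bar>y\<bar> ^ k * exp (- (\<bar>y\<bar> powr p)) \<le> 1"
      by (simp add: mult_le_one)
    moreover have "0 \<le> \<bar>y\<bar> ^ k * exp (- \<bar>y\<bar>)" by simp
    moreover have "indicator {-1..1} y = (1::real)" using True by (auto simp: indicator_def abs_le_iff)
    ultimately show ?thesis by linarith
  next
    case False
    have "\<bar>y\<bar> powr 1 \<le> \<bar>y\<bar> powr p" using False p by (intro powr_mono) auto
    then have "exp (- (\<bar>y\<bar> powr p)) \<le> exp (- \<bar>y\<bar>)" using False by simp
    then have "\<bar>y\<bar> ^ k * exp (- (\<bar>y\<bar> powr p)) \<le> \<bar>y\<bar> ^ k * exp (- \<bar>y\<bar>)"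
      by (simp add: mult_left_mono)
    then show ?thesis by (simp add: indicator_def)
  qed
  have "(\<integral>\<^sup>+ y. ennreal (\<bar>y\<bar> ^ k * exp (- (\<bar>y\<bar> powr p))) \<partial>lborel) \<le>
      (\<integral>\<^sup>+ y. ennreal (indicator {-1..1} y) + ennreal (\<bar>y\<bar> ^ k * exp (- \<bar>y\<bar>)) \<partial>lborel)"
    using pt by (intro nn_integral_mono) (simp flip: ennreal_plus)
  also have "\<dots> = (\<integral>\<^sup>+ (y::real). ennreal (indicator {-1..1} y) \<partial>lborel) + (\<integral>\<^sup>+ y. ennreal (\<bar>y\<bar> ^ k * exp (- \<bar>y\<bar>)) \<partial>lborel)"
    by (subst nn_integral_add) auto
  also have "(\<integral>\<^sup>+ (y::real). ennreal (indicator {-1..1} y) \<partial>lborel) = 2"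
    by (simp add: ennreal_indicator)
  also have "2 + (\<integral>\<^sup>+ y. ennreal (\<bar>y\<bar> ^ k * exp (- \<bar>y\<bar>)) \<partial>lborel) \<le> 2 + ennreal (2 * Gamma (real k + 1))"
    by (intro add_left_mono nn_exp_abs_pow_le)
  finally show ?thesis using Gamma_real_pos[of "real k + 1"] by (subst ennreal_plus) auto
qed

lemma mom_integrable:
  assumes p: "p \<ge> 1"
  shows "integrable lborel (\<lambda>y::real. \<bar>y\<bar> ^ k * exp (- (\<bar>y\<bar> powr p)))"
proof (subst integrable_iff_bounded, intro conjI)
  show "(\<lambda>y::real. \<bar>y\<bar> ^ k * exp (- (\<bar>y\<bar> powr p))) \<in> borel_measurable lborel" by measurable
  have "(\<integral>\<^sup>+ y. ennreal (norm (\<bar>y\<bar> ^ k * exp (- (\<bar>y\<bar> powr p)))) \<partial>lborel) =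
        (\<integral>\<^sup>+ y. ennreal (\<bar>y\<bar> ^ k * exp (- (\<bar>y\<bar> powr p))) \<partial>lborel)"
    by (intro nn_integral_cong) simp
  also have "\<dots> \<le> ennreal (2 + 2 * Gamma (real k + 1))" by (rule mom_nn_le[OF p])
  finally show "(\<integral>\<^sup>+ y. ennreal (norm (\<bar>y\<bar> ^ k * exp (- (\<bar>y\<bar> powr p)))) \<partial>lborel) < \<infinity>"
    by (simp add: le_less_trans)
qed

lemma poly_exp_integrable:
  assumes p: "p \<ge> 1"
  shows "integrable lborel (\<lambda>y::real. poly R y * exp (- (\<bar>y\<bar> powr p)))"
proof -
  have mon: "integrable lborel (\<lambda>y::real. y ^ i * exp (- (\<bar>y\<bar> powr p)))" for i
    by (rule Bochner_Integration.integrable_bound[OF mom_integrable[OF p, of i]]) (auto simp: abs_mult power_abs)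
  have "integrable lborel (\<lambda>y::real. \<Sum>i\<le>degree R. coeff R i * (y ^ i * exp (- (\<bar>y\<bar> powr p))))"
    by (simp add: mon)
  then show ?thesis
    by (simp add: poly_altdef sum_distrib_right mult.assoc)
qed

definition Zp :: "real \<Rightarrow> real" where
  "Zp p = (\<integral>y. exp (- (\<bar>y\<bar> powr p)) \<partial>lborel)"

definition rho :: "real \<Rightarrow> real \<Rightarrow> real" where
  "rho p y = exp (- (\<bar>y\<bar> powr p)) / Zp p"

lemma Zp_bounds:
  assumes p: "p \<ge> 1"
  shows "2 / exp 1 \<le> Zp p" "Zp p \<le> 4"
proof -
  have int: "integrable lborel (\<lambda>y::real. exp (- (\<bar>y\<bar> powr p)))"
    using mom_integrable[OF p, of 0] by simp
  have "Zp p = enn2real (\<integral>\<^sup>+ y. ennreal (exp (- (\<bar>y\<bar> powr p))) \<partial>lborel)"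
    unfolding Zp_def by (rule integral_eq_nn_integral) auto
  also have "\<dots> \<le> enn2real (ennreal (2 + 2 * Gamma (real 0 + 1)))"
    using mom_nn_le[OF p, of 0] by (intro enn2real_mono) auto
  finally show "Zp p \<le> 4" by simp
  have "(\<integral>(y::real). indicator {-1..1} y * exp (- 1) \<partial>lborel) \<le> Zp p"
    unfolding Zp_def
  proof (rule Bochner_Integration.integral_mono[OF _ int])
    show "integrable lborel (\<lambda>y::real. indicator {-1..1} y * exp (- 1) :: real)"
      by (rule integrable_mult_left, rule integrable_real_indicator) auto
    fix y :: real
    show "indicator {-1..1} y * exp (- 1) \<le> exp (- (\<bar>y\<bar> powr p))"
    proof (cases "y \<in> {-1..1}")
      case True
      then have "\<bar>y\<bar> powr p \<le> 1"
        using p by (intro powr_le1) (auto simp: abs_le_iff)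
      then show ?thesis using True by simp
    qed simp
  qed
  then show "2 / exp 1 \<le> Zp p" by (simp add: exp_minus field_simps)
qed

lemma poly_rho_integrable:
  assumes p: "p \<ge> 1"
  shows "integrable lborel (\<lambda>y::real. poly R y * rho p y)"
  unfolding rho_def using integrable_divide[OF poly_exp_integrable[OF p, of R], of "Zp p"]
  by (simp add: mult.assoc)

lemma rho_nonneg: "p \<ge> 1 \<Longrightarrow> 0 \<le> rho p y"
  using Zp_bounds(1)[of p] unfolding rho_def
  by (intro divide_nonneg_pos) (auto intro: less_le_trans[rotated])

lemma Zp_pos: "p \<ge> 1 \<Longrightarrow> Zp p > 0"
  using Zp_bounds(1)[of p] by (auto intro: less_le_trans[rotated])

lemma rho_int1: assumes "p \<ge> 1" shows "(\<integral>y. rho p y \<partial>lborel) = 1"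
proof -
  have "(\<integral>y. rho p y \<partial>lborel) = Zp p / Zp p" unfolding rho_def Zp_def by simp
  then show ?thesis using Zp_pos[OF assms] by simp
qed

lemma poly_sq_rho_integrable:
  assumes p: "p \<ge> 1"
  shows "integrable lborel (\<lambda>y::real. (poly q y)\<^sup>2 * rho p y)"
  using poly_rho_integrable[OF p, of "q^2"] by (simp add: poly_power)

lemma rho_lower_unit:
  assumes p: "p \<ge> 1" and y: "\<bar>y\<bar> \<le> 1"
  shows "exp (- 1) / 4 \<le> rho p y"
proof -
  have "\<bar>y\<bar> powr p \<le> 1" using p y by (intro powr_le1) auto
  then have e: "exp (- 1) \<le> exp (- (\<bar>y\<bar> powr p))" by simp
  have Z: "0 < Zp p" "Zp p \<le> 4" using Zp_pos[OF p] Zp_bounds(2)[OF p] by auto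
  have "exp (- 1) / 4 \<le> exp (- 1) / Zp p" using Z by (intro divide_left_mono) auto
  also have "\<dots> \<le> exp (- (\<bar>y\<bar> powr p)) / Zp p" using Z e by (intro divide_right_mono) auto
  finally show ?thesis unfolding rho_def .
qed

lemma monic_rho_lower:
  fixes q :: "real poly"
  assumes p: "p \<ge> 1" and lc: "lead_coeff q = 1"
  shows "(1 / (2 * (real (degree q) + 1))) ^ (2 * degree q) / (4 * exp 1)
           \<le> (\<integral>y. (poly q y)\<^sup>2 * rho p y \<partial>lborel)"
proof -
  obtain r where r: "\<And>y. (\<Prod>i<degree q. \<bar>y - r i\<bar>) \<le> \<bar>poly q y\<bar>"
    using monic_abs_lower[OF lc] by blast
  define j where "j = degree q"
  define \<delta> :: real where "\<delta> = 1 / (2 * (real j + 1))"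
  define c0 where "c0 = \<delta> ^ (2 * j) / (4 * exp 1)"
  have \<delta>pos: "\<delta> > 0" unfolding \<delta>_def by simp
  have c0pos: "c0 \<ge> 0" unfolding c0_def using \<delta>pos by simp
  define L where "L y = c0 * (indicator {-1..1} y - (\<Sum>i<j. indicator {r i - \<delta> <..< r i + \<delta>} y))" for y :: real
  have intL: "integrable lborel L"
    unfolding L_def
    by (intro integrable_mult_right Bochner_Integration.integrable_diff Bochner_Integration.integrable_sum integrable_real_indicator) (use \<delta>pos in auto)
  have intL_val: "integral\<^sup>L lborel L = c0 * (2 - real j * (2 * \<delta>))"
  proof -
    have "integral\<^sup>L lborel L = c0 * ((\<integral>y. indicator {-1..1::real} y \<partial>lborel) -
             (\<Sum>i<j. (\<integral>y. indicator {r i - \<delta> <..< r i + \<delta>} y \<partial>lborel)))"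
    proof -
      have i1: "integrable lborel (indicator {-1..1::real} :: real \<Rightarrow> real)" by auto
      have i2: "integrable lborel (\<lambda>y. (\<Sum>i<j. indicator {r i - \<delta> <..< r i + \<delta>} y) :: real)"
        by (intro Bochner_Integration.integrable_sum integrable_real_indicator) (use \<delta>pos in auto)
      have "integral\<^sup>L lborel L = c0 * (\<integral>y. (indicator {-1..1} y :: real) - (\<Sum>i<j. indicator {r i - \<delta> <..< r i + \<delta>} y) \<partial>lborel)"
        unfolding L_def by simp
      also have "(\<integral>y. (indicator {-1..1} y :: real) - (\<Sum>i<j. indicator {r i - \<delta> <..< r i + \<delta>} y) \<partial>lborel)
         = (\<integral>y. (indicator {-1..1::real} y :: real) \<partial>lborel) - (\<integral>y. (\<Sum>i<j. indicator {r i - \<delta> <..< r i + \<delta>} y :: real) \<partial>lborel)"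
        by (rule Bochner_Integration.integral_diff[OF i1 i2])
      also have "(\<integral>y. (\<Sum>i<j. indicator {r i - \<delta> <..< r i + \<delta>} y :: real) \<partial>lborel) = 
           (\<Sum>i<j. (\<integral>y. (indicator {r i - \<delta> <..< r i + \<delta>} y :: real) \<partial>lborel))"
        by (rule Bochner_Integration.integral_sum) (use \<delta>pos in auto)
      finally show ?thesis .
    qed
    also have "\<dots> = c0 * (2 - real j * (2 * \<delta>))"
      using \<delta>pos by (simp add: integral_indicator)
    finally show ?thesis .
  qed
  have pt: "L y \<le> (poly q y)\<^sup>2 * rho p y" for y
  proof (cases "\<bar>y\<bar> \<le> 1 \<and> (\<forall>i<j. y \<notin> {r i - \<delta> <..< r i + \<delta>})")
    case True
    then have far: "\<delta> \<le> \<bar>y - r i\<bar>" if "i < j" for i using that by (auto simp: abs_if split: if_splits)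
    have "\<delta> ^ j = (\<Prod>i<j. \<delta>)" by simp
    also have "\<dots> \<le> (\<Prod>i<j. \<bar>y - r i\<bar>)" using far \<delta>pos by (intro prod_mono) auto
    also have "\<dots> \<le> \<bar>poly q y\<bar>" using r j_def by simp
    finally have "\<delta> ^ j \<le> \<bar>poly q y\<bar>" .
    then have "(\<delta> ^ j)\<^sup>2 \<le> \<bar>poly q y\<bar>\<^sup>2" using \<delta>pos by (intro power_mono) auto
    then have qq: "\<delta> ^ (2 * j) \<le> (poly q y)\<^sup>2" by (simp add: power_mult[symmetric] mult.commute)
    have rr: "exp (- 1) / 4 \<le> rho p y" using rho_lower_unit[OF p] True by auto
    have "L y = c0" using True unfolding L_def by (simp add: indicator_def abs_le_iff) auto
    also have "c0 = \<delta> ^ (2 * j) * (exp (- 1) / 4)" unfolding c0_def by (simp add: exp_minus field_simps)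
    also have "\<dots> \<le> (poly q y)\<^sup>2 * rho p y"
      using qq rr \<delta>pos by (intro mult_mono) auto
    finally show ?thesis .
  next
    case False
    have "indicator {-1..1} y - (\<Sum>i<j. indicator {r i - \<delta> <..< r i + \<delta>} y) \<le> (0::real)"
    proof (cases "\<bar>y\<bar> \<le> 1")
      case True
      with False obtain i where i: "i < j" "y \<in> {r i - \<delta> <..< r i + \<delta>}" by auto
      have "(1::real) \<le> (\<Sum>i<j. indicator {r i - \<delta> <..< r i + \<delta>} y)"
      proof -
        have "(indicator {r i - \<delta> <..< r i + \<delta>} y :: real) \<le> (\<Sum>i<j. indicator {r i - \<delta> <..< r i + \<delta>} y)"
          by (rule member_le_sum) (use i in auto)
        then show ?thesis using i by simp
      qed
      then show ?thesis by (simp add: indicator_def)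
    next
      case False
      then have "indicator {-1..1} y = (0::real)" by (auto simp: indicator_def abs_le_iff)
      moreover have "(0::real) \<le> (\<Sum>i<j. indicator {r i - \<delta> <..< r i + \<delta>} y)" by (intro sum_nonneg) auto
      ultimately show ?thesis by simp
    qed
    then have "L y \<le> 0" unfolding L_def using c0pos by (simp add: mult_nonneg_nonpos)
    also have "0 \<le> (poly q y)\<^sup>2 * rho p y" using rho_nonneg[OF p] by simp
    finally show ?thesis .
  qed
  have "c0 \<le> c0 * (2 - real j * (2 * \<delta>))"
  proof -
    have "real j * (2 * \<delta>) \<le> 1" unfolding \<delta>_def by (simp add: field_simps)
    then show ?thesis using c0pos by (simp add: mult_le_cancel_left1)
  qed
  also have "\<dots> = integral\<^sup>L lborel L" by (rule intL_val[symmetric])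
  also have "\<dots> \<le> (\<integral>y. (poly q y)\<^sup>2 * rho p y \<partial>lborel)"
    by (rule Bochner_Integration.integral_mono[OF intL poly_sq_rho_integrable[OF p] pt])
  finally show ?thesis unfolding c0_def \<delta>_def j_def .
qed

definition ip :: "real \<Rightarrow> real poly \<Rightarrow> real poly \<Rightarrow> real" where
  "ip p P Q = (\<integral>y. poly P y * poly Q y * rho p y \<partial>lborel)"

lemma ip_integrable:
  assumes p: "p \<ge> 1"
  shows "integrable lborel (\<lambda>y. poly P y * poly Q y * rho p y)"
  using poly_rho_integrable[OF p, of "P * Q"] by simp

lemma ip_sym: "ip p P Q = ip p Q P"
  unfolding ip_def by (simp add: mult.commute mult.left_commute)

lemma ip_add: assumes p: "p \<ge> 1" shows "ip p (P + Q) R = ip p P R + ip p Q R"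
proof -
  have "ip p (P + Q) R = (\<integral>y. poly P y * poly R y * rho p y + poly Q y * poly R y * rho p y \<partial>lborel)"
    unfolding ip_def by (simp add: algebra_simps)
  also have "\<dots> = ip p P R + ip p Q R"
    unfolding ip_def by (rule Bochner_Integration.integral_add[OF ip_integrable[OF p] ip_integrable[OF p]])
  finally show ?thesis .
qed

lemma ip_smult: "ip p (smult c P) R = c * ip p P R"
  unfolding ip_def by (simp add: mult.assoc)

lemma ip_zero: "ip p 0 R = 0"
  unfolding ip_def by simp

lemma ip_sum: assumes p: "p \<ge> 1" and K: "finite K"
  shows "ip p (\<Sum>k\<in>K. smult (c k) (P k)) R = (\<Sum>k\<in>K. c k * ip p (P k) R)"
  using K by (induction K rule: finite_induct) (auto simp: ip_add[OF p] ip_smult ip_zero)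

lemma ip_self: "ip p P P = (\<integral>y. (poly P y)\<^sup>2 * rho p y \<partial>lborel)"
  unfolding ip_def by (simp add: power2_eq_square)

lemma monic_minus_low:
  fixes R :: "real poly"
  assumes "degree R < n"
  shows "degree (monom 1 n - R) = n" "lead_coeff (monom 1 n - R) = 1"
proof -
  have c: "coeff (monom 1 n - R) n = 1" using assms by (simp add: coeff_eq_0)
  have "degree (monom 1 n - R) \<le> n"
    using assms by (intro degree_diff_le) (auto simp: degree_monom_le)
  moreover have "n \<le> degree (monom 1 n - R)" using c by (intro le_degree) simp
  ultimately show d: "degree (monom 1 n - R) = n" by simp
  show "lead_coeff (monom 1 n - R) = 1" using c d by simp
qed

definition cd :: "nat \<Rightarrow> real" where
  "cd d = (1 / (2 * (real d + 1))) ^ (2 * d) / (4 * exp 1)"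

lemma cd_pos: "cd d > 0" unfolding cd_def by simp

lemma cd_le1: "cd d \<le> 1"
proof -
  have "(1 / (2 * (real d + 1))) ^ (2 * d) \<le> 1" by (intro power_le_one) auto
  moreover have "1 \<le> 4 * exp (1::real)" using exp_ge_add_one_self[of 1] by simp
  ultimately show ?thesis unfolding cd_def by (simp add: divide_le_eq)
qed

lemma cd_mono: assumes "j \<le> d" shows "cd d \<le> (1 / (2 * (real j + 1))) ^ (2 * j) / (4 * exp 1)"
proof -
  have "(1 / (2 * (real d + 1))) ^ (2 * d) \<le> (1 / (2 * (real d + 1))) ^ (2 * j)"
    using assms by (intro power_decreasing) auto
  also have "\<dots> \<le> (1 / (2 * (real j + 1))) ^ (2 * j)"
    using assms by (intro power_mono divide_left_mono) auto
  finally show ?thesis unfolding cd_def by (simp add: divide_right_mono)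
qed

lemma ip_monic_lower:
  assumes p: "p \<ge> 1" and lc: "lead_coeff Q = 1" and dg: "degree Q \<le> d"
  shows "cd d \<le> ip p Q Q"
  using cd_mono[OF dg] monic_rho_lower[OF p lc] unfolding ip_self by linarith

lemma GS_exists:
  assumes p: "p \<ge> 1"
  shows "\<exists>Q::nat \<Rightarrow> real poly. \<forall>j\<le>m. lead_coeff (Q j) = 1 \<and> degree (Q j) = j \<and>
            (\<forall>i\<le>m. i \<noteq> j \<longrightarrow> ip p (Q i) (Q j) = 0)"
proof (induction m)
  case 0
  show ?case by (rule exI[of _ "\<lambda>_. 1"]) auto
next
  case (Suc m)
  then obtain Q where Q: "\<forall>j\<le>m. lead_coeff (Q j) = 1 \<and> degree (Q j) = j \<and>
            (\<forall>i\<le>m. i \<noteq> j \<longrightarrow> ip p (Q i) (Q j) = 0)" by blast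
  define c where "c i = ip p (monom 1 (Suc m)) (Q i) / ip p (Q i) (Q i)" for i
  define R where "R = (\<Sum>i\<le>m. smult (c i) (Q i))"
  define N where "N = monom 1 (Suc m) - R"
  have dR: "degree R < Suc m"
    unfolding R_def
    by (rule le_less_trans[OF degree_sum_le]) (use Q in \<open>auto intro: order_trans[OF degree_smult_le]\<close>)
  have N: "degree N = Suc m" "lead_coeff N = 1" unfolding N_def using monic_minus_low[OF dR] by auto
  have pos: "ip p (Q i) (Q i) > 0" if "i \<le> m" for i
    using ip_monic_lower[OF p, of "Q i" m] Q that cd_pos[of m] by auto
  have orth: "ip p N (Q i) = 0" if i: "i \<le> m" for i
  proof -
    have "ip p N (Q i) = ip p (monom 1 (Suc m)) (Q i) - ip p R (Q i)"
      unfolding N_def using ip_add[OF p, of "monom 1 (Suc m) - R" R "Q i"] by simp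
    also have "ip p R (Q i) = (\<Sum>k\<le>m. c k * ip p (Q k) (Q i))"
      unfolding R_def by (rule ip_sum[OF p]) simp
    also have "\<dots> = c i * ip p (Q i) (Q i)"
      by (rule sum.remove[where x=i, THEN trans]) (use i Q in \<open>auto intro!: sum.neutral\<close>)
    also have "\<dots> = ip p (monom 1 (Suc m)) (Q i)"
      unfolding c_def using pos[OF i] by simp
    finally show ?thesis by simp
  qed
  show ?case
  proof (rule exI[of _ "Q(Suc m := N)"], intro allI impI)
    fix j assume j: "j \<le> Suc m"
    have A: "lead_coeff ((Q(Suc m := N)) j) = 1 \<and> degree ((Q(Suc m := N)) j) = j"
      using j Q N by (auto simp: le_Suc_eq)
    have B: "\<forall>i\<le>Suc m. i \<noteq> j \<longrightarrow> ip p ((Q(Suc m := N)) i) ((Q(Suc m := N)) j) = 0"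
      using j Q orth by (auto simp: le_Suc_eq ip_sym)
    show "lead_coeff ((Q(Suc m := N)) j) = 1 \<and> degree ((Q(Suc m := N)) j) = j \<and>
       (\<forall>i\<le>Suc m. i \<noteq> j \<longrightarrow> ip p ((Q(Suc m := N)) i) ((Q(Suc m := N)) j) = 0)"
      using A B by blast
  qed
qed

lemma degree_le_of_coeff0:
  fixes P :: "real poly"
  assumes "degree P \<le> Suc k" "coeff P (Suc k) = 0"
  shows "degree P \<le> k"
proof (rule ccontr)
  assume "\<not> degree P \<le> k"
  then have "degree P = Suc k" using assms by simp
  then have "lead_coeff P = 0" using assms by simp
  then have "P = 0" by simp
  then show False using \<open>\<not> degree P \<le> k\<close> by simp
qed

lemma deg0_monic: assumes "degree (Q::real poly) = 0" "lead_coeff Q = 1" shows "Q = 1"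
proof -
  obtain c where c: "Q = [:c:]" using assms(1) by (rule degree_eq_zeroE)
  then have "c = 1" using assms by simp
  then show ?thesis using c by (simp add: one_pCons)
qed

lemma expand:
  fixes Q :: "nat \<Rightarrow> real poly"
  assumes Q: "\<forall>j\<le>k. lead_coeff (Q j) = 1 \<and> degree (Q j) = j"
    and dP: "degree P \<le> k"
  shows "\<exists>e. P = (\<Sum>j\<le>k. smult (e j) (Q j)) \<and> e k = coeff P k"
  using Q dP
proof (induction k arbitrary: P)
  case 0
  then have Q0: "Q 0 = 1" by (intro deg0_monic) auto
  from 0 obtain c where "P = [:c:]" by (metis degree_eq_zeroE le_zero_eq)
  then show ?case using Q0 by (intro exI[of _ "\<lambda>_. c"]) auto
next
  case (Suc k)
  define P' where "P' = P - smult (coeff P (Suc k)) (Q (Suc k))"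
  have QS: "lead_coeff (Q (Suc k)) = 1" "degree (Q (Suc k)) = Suc k" using Suc.prems by auto
  have "degree P' \<le> Suc k" unfolding P'_def using Suc.prems QS
    by (intro degree_diff_le) (auto intro: order_trans[OF degree_smult_le])
  moreover have "coeff P' (Suc k) = 0" unfolding P'_def using QS by simp
  ultimately have "degree P' \<le> k" by (rule degree_le_of_coeff0)
  moreover have "\<forall>j\<le>k. lead_coeff (Q j) = 1 \<and> degree (Q j) = j" using Suc.prems le_SucI by blast
  ultimately obtain e where e: "P' = (\<Sum>j\<le>k. smult (e j) (Q j))"
    using Suc.IH[of P'] by blast
  have "P = P' + smult (coeff P (Suc k)) (Q (Suc k))" unfolding P'_def by simp
  also have "\<dots> = (\<Sum>j\<le>Suc k. smult ((e(Suc k := coeff P (Suc k))) j) (Q j))"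
    using e by (simp add: sum.atMost_Suc)
  finally show ?case by (intro exI[of _ "e(Suc k := coeff P (Suc k))"]) simp
qed

lemma univariate_key:
  assumes p: "p \<ge> 1"
  shows "\<exists>e::nat\<Rightarrow>nat\<Rightarrow>real. (\<forall>k j. k < j \<longrightarrow> e k j = 0) \<and> (\<forall>j\<le>d. e j j = 1) \<and>
    (\<forall>D\<le>d. \<forall>A. (\<Sum>j\<le>D. (if j = 0 then 1 else cd d) * (\<Sum>k\<le>D. e k j * A k)\<^sup>2)
        \<le> (\<integral>y. (\<Sum>k\<le>D. y ^ k * A k)\<^sup>2 * rho p y \<partial>lborel))"
proof -
  obtain Q where Q: "\<forall>j\<le>d. lead_coeff (Q j) = 1 \<and> degree (Q j) = j \<and>
            (\<forall>i\<le>d. i \<noteq> j \<longrightarrow> ip p (Q i) (Q j) = 0)"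
    using GS_exists[OF p, of d] by blast
  have "\<forall>k\<le>d. \<exists>ek. monom 1 k = (\<Sum>j\<le>k. smult (ek j) (Q j)) \<and> ek k = 1"
  proof (intro allI impI)
    fix k assume k: "k \<le> d"
    have "\<exists>e. monom 1 k = (\<Sum>j\<le>k. smult (e j) (Q j)) \<and> e k = coeff (monom (1::real) k) k"
    proof (rule expand)
      show "\<forall>j\<le>k. lead_coeff (Q j) = 1 \<and> degree (Q j) = j" using Q k le_trans by blast
    qed (simp add: degree_monom_le)
    then show "\<exists>ek. monom 1 k = (\<Sum>j\<le>k. smult (ek j) (Q j)) \<and> ek k = 1" by simp
  qed
  then obtain E where E: "\<And>k. k \<le> d \<Longrightarrow> monom 1 k = (\<Sum>j\<le>k. smult (E k j) (Q j)) \<and> E k k = 1"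
    by metis
  define e where "e k j = (if j \<le> k then E k j else 0)" for k j
  have Q0: "Q 0 = 1" using Q by (intro deg0_monic) auto
  have ipQ0: "ip p (Q 0) (Q 0) = 1" using rho_int1[OF p] by (simp add: Q0 ip_def)
  have ipQj: "cd d \<le> ip p (Q j) (Q j)" if "j \<le> d" for j
    using ip_monic_lower[OF p, of "Q j" d] Q that by auto
  have main: "(\<Sum>j\<le>D. (if j = 0 then 1 else cd d) * (\<Sum>k\<le>D. e k j * A k)\<^sup>2)
        \<le> (\<integral>y. (\<Sum>k\<le>D. y ^ k * A k)\<^sup>2 * rho p y \<partial>lborel)" if D: "D \<le> d" for D A
  proof -
    define B where "B j = (\<Sum>k\<le>D. e k j * A k)" for j
    define R where "R = (\<Sum>j\<le>D. smult (B j) (Q j))"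
    have polyeq: "(\<Sum>k\<le>D. y ^ k * A k) = poly R y" for y
    proof -
      have "(\<Sum>k\<le>D. y ^ k * A k) = (\<Sum>k\<le>D. A k * (\<Sum>j\<le>D. e k j * poly (Q j) y))"
      proof (intro sum.cong refl)
        fix k assume k: "k \<in> {..D}"
        have "y ^ k = poly (monom 1 k) y" by (simp add: poly_monom)
        also have "\<dots> = (\<Sum>j\<le>k. E k j * poly (Q j) y)" using E[of k] k D by (simp add: poly_sum)
        also have "\<dots> = (\<Sum>j\<le>D. e k j * poly (Q j) y)"
          using k unfolding e_def by (intro sum.mono_neutral_cong_left) auto
        finally show "y ^ k * A k = A k * (\<Sum>j\<le>D. e k j * poly (Q j) y)" by simp
      qed
      also have "\<dots> = (\<Sum>j\<le>D. B j * poly (Q j) y)"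
      proof -
        have "(\<Sum>k\<le>D. A k * (\<Sum>j\<le>D. e k j * poly (Q j) y)) = (\<Sum>k\<le>D. \<Sum>j\<le>D. e k j * A k * poly (Q j) y)"
          by (simp add: sum_distrib_left mult.commute mult.left_commute)
        also have "\<dots> = (\<Sum>j\<le>D. \<Sum>k\<le>D. e k j * A k * poly (Q j) y)" by (rule sum.swap)
        also have "\<dots> = (\<Sum>j\<le>D. B j * poly (Q j) y)" unfolding B_def by (simp add: sum_distrib_right)
        finally show ?thesis .
      qed
      also have "\<dots> = poly R y" unfolding R_def by (simp add: poly_sum)
      finally show ?thesis .
    qed
    have "ip p R R = (\<Sum>j\<le>D. B j * ip p (Q j) R)" unfolding R_def[of] by (rule ip_sum[OF p]) simp
    also have "\<dots> = (\<Sum>j\<le>D. B j * (B j * ip p (Q j) (Q j)))"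
    proof (intro sum.cong refl)
      fix j assume j: "j \<in> {..D}"
      have "ip p (Q j) R = ip p R (Q j)" by (rule ip_sym)
      also have "\<dots> = (\<Sum>i\<le>D. B i * ip p (Q i) (Q j))" unfolding R_def by (rule ip_sum[OF p]) simp
      also have "\<dots> = B j * ip p (Q j) (Q j)"
        by (rule sum.remove[where x=j, THEN trans]) (use j D Q in \<open>auto intro!: sum.neutral\<close>)
      finally show "B j * ip p (Q j) R = B j * (B j * ip p (Q j) (Q j))" by simp
    qed
    finally have ipRR: "ip p R R = (\<Sum>j\<le>D. (B j)\<^sup>2 * ip p (Q j) (Q j))" by (simp add: power2_eq_square mult.assoc)
    have "(\<Sum>j\<le>D. (if j = 0 then 1 else cd d) * (B j)\<^sup>2) \<le> (\<Sum>j\<le>D. (B j)\<^sup>2 * ip p (Q j) (Q j))"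
    proof (intro sum_mono)
      fix j assume j: "j \<in> {..D}"
      show "(if j = 0 then 1 else cd d) * (B j)\<^sup>2 \<le> (B j)\<^sup>2 * ip p (Q j) (Q j)"
        using ipQ0 ipQj[of j] j D mult_right_mono[of "cd d" "ip p (Q j) (Q j)" "(B j)\<^sup>2"]
        by (cases "j = 0") (auto simp: mult.commute)
    qed
    also have "\<dots> = (\<integral>y. (\<Sum>k\<le>D. y ^ k * A k)\<^sup>2 * rho p y \<partial>lborel)"
    proof -
      have "ip p R R = (\<integral>y. (\<Sum>k\<le>D. y ^ k * A k)\<^sup>2 * rho p y \<partial>lborel)"
        by (simp add: ip_self polyeq)
      then show ?thesis using ipRR by simp
    qed
    finally show ?thesis unfolding B_def .
  qed
  show ?thesis
  proof (rule exI[of _ e], intro conjI allI impI)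
    fix k j :: nat assume "k < j" then show "e k j = 0" unfolding e_def by simp
  next
    fix j assume "j \<le> d" then show "e j j = 1" unfolding e_def using E by simp
  next
    fix D A assume "D \<le> d" then show "(\<Sum>j\<le>D. (if j = 0 then 1 else cd d) * (\<Sum>k\<le>D. e k j * A k)\<^sup>2)
        \<le> (\<integral>y. (\<Sum>k\<le>D. y ^ k * A k)\<^sup>2 * rho p y \<partial>lborel)" by (rule main)
  qed
qed

definition SI :: "nat \<Rightarrow> nat \<Rightarrow> (nat \<Rightarrow> nat) set" where
  "SI n D = {I. (\<forall>i\<ge>n. I i = 0) \<and> (\<Sum>i<n. I i) \<le> D}"

definition ev :: "nat \<Rightarrow> nat \<Rightarrow> ((nat \<Rightarrow> nat) \<Rightarrow> real) \<Rightarrow> (nat \<Rightarrow> real) \<Rightarrow> real" where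
  "ev n D \<beta> x = (\<Sum>I\<in>SI n D. \<beta> I * (\<Prod>i<n. x i ^ I i))"

lemma SI_0: "SI 0 D = {\<lambda>_. 0}"
  unfolding SI_def by auto

lemma MI_0: "multi_idx 0 D = (if D = 0 then {\<lambda>_. 0} else {})"
  unfolding multi_idx_def by auto

lemma SI_Suc_bij: "bij_betw (\<lambda>I. (I n, I(n:=0))) (SI (Suc n) D) (SIGMA k:{..D}. SI n (D - k))"
proof (rule bij_betw_byWitness[where f'="\<lambda>(k, I). I(n:=k)"])
  show "\<forall>a\<in>SI (Suc n) D. (\<lambda>(k, I). I(n := k)) (a n, a(n := 0)) = a" by auto
  show "\<forall>a'\<in>(SIGMA k:{..D}. SI n (D - k)). (\<lambda>I. (I n, I(n := 0))) ((\<lambda>(k, I). I(n := k)) a') = a'"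
    by (auto simp: SI_def)
  show "(\<lambda>I. (I n, I(n := 0))) ` SI (Suc n) D \<subseteq> (SIGMA k:{..D}. SI n (D - k))"
  proof (rule image_subsetI)
    fix I assume I: "I \<in> SI (Suc n) D"
    then have s: "(\<Sum>i<n. I i) + I n \<le> D" by (simp add: SI_def)
    have "(\<Sum>i<n. (I(n := 0)) i) = (\<Sum>i<n. I i)" by (intro sum.cong) auto
    then have "I(n := 0) \<in> SI n (D - I n)" using I s by (auto simp: SI_def)
    then show "(I n, I(n := 0)) \<in> (SIGMA k:{..D}. SI n (D - k))" using s by auto
  qed
  show "(\<lambda>(k, I). I(n := k)) ` (SIGMA k:{..D}. SI n (D - k)) \<subseteq> SI (Suc n) D"
  proof (rule image_subsetI)
    fix z assume "z \<in> (SIGMA k:{..D}. SI n (D - k))"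
    then obtain k I where z: "z = (k, I)" and k: "k \<in> {..D}" and I: "I \<in> SI n (D - k)" by auto
    have "(\<Sum>i<n. (I(n := k)) i) = (\<Sum>i<n. I i)" by (intro sum.cong) auto
    then show "(\<lambda>(k, I). I(n := k)) z \<in> SI (Suc n) D" using I k z by (auto simp: SI_def)
  qed
qed

lemma MI_Suc_bij: "bij_betw (\<lambda>I. (I n, I(n:=0))) (multi_idx (Suc n) D) (SIGMA k:{..D}. multi_idx n (D - k))"
proof (rule bij_betw_byWitness[where f'="\<lambda>(k, I). I(n:=k)"])
  show "\<forall>a\<in>multi_idx (Suc n) D. (\<lambda>(k, I). I(n := k)) (a n, a(n := 0)) = a" by auto
  show "\<forall>a'\<in>(SIGMA k:{..D}. multi_idx n (D - k)). (\<lambda>I. (I n, I(n := 0))) ((\<lambda>(k, I). I(n := k)) a') = a'"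
    by (auto simp: multi_idx_def)
  show "(\<lambda>I. (I n, I(n := 0))) ` multi_idx (Suc n) D \<subseteq> (SIGMA k:{..D}. multi_idx n (D - k))"
  proof (rule image_subsetI)
    fix I assume I: "I \<in> multi_idx (Suc n) D"
    then have s: "(\<Sum>i<n. I i) + I n = D" by (simp add: multi_idx_def)
    have "(\<Sum>i<n. (I(n := 0)) i) = (\<Sum>i<n. I i)" by (intro sum.cong) auto
    then have "I(n := 0) \<in> multi_idx n (D - I n)" using I s by (auto simp: multi_idx_def)
    then show "(I n, I(n := 0)) \<in> (SIGMA k:{..D}. multi_idx n (D - k))" using s by auto
  qed
  show "(\<lambda>(k, I). I(n := k)) ` (SIGMA k:{..D}. multi_idx n (D - k)) \<subseteq> multi_idx (Suc n) D"
  proof (rule image_subsetI)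
    fix z assume "z \<in> (SIGMA k:{..D}. multi_idx n (D - k))"
    then obtain k I where z: "z = (k, I)" and k: "k \<in> {..D}" and I: "I \<in> multi_idx n (D - k)" by auto
    have "(\<Sum>i<n. (I(n := k)) i) = (\<Sum>i<n. I i)" by (intro sum.cong) auto
    then show "(\<lambda>(k, I). I(n := k)) z \<in> multi_idx (Suc n) D" using I k z by (auto simp: multi_idx_def)
  qed
qed

lemma finite_SI: "finite (SI n D)"
proof (induction n arbitrary: D)
  case 0 then show ?case by (simp add: SI_0)
next
  case (Suc n)
  have "finite (SIGMA k:{..D}. SI n (D - k))" using Suc by auto
  then show ?case using bij_betw_finite[OF SI_Suc_bij] by blast
qed

lemma MI_sub_SI: "multi_idx n D \<subseteq> SI n D"
  unfolding multi_idx_def SI_def by auto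

lemma finite_MI: "finite (multi_idx n D)"
  using finite_subset[OF MI_sub_SI finite_SI] .

lemma sum_SI_Suc:
  "(\<Sum>I\<in>SI (Suc n) D. f I) = (\<Sum>k\<le>D. \<Sum>I\<in>SI n (D - k). f (I(n := k)))"
proof -
  have "(\<Sum>I\<in>SI (Suc n) D. f I) = (\<Sum>I\<in>SI (Suc n) D. (\<lambda>(k, J). f (J(n:=k))) (I n, I(n:=0)))"
    by (intro sum.cong) auto
  also have "\<dots> = (\<Sum>z\<in>(SIGMA k:{..D}. SI n (D - k)). (\<lambda>(k, J). f (J(n:=k))) z)"
    by (rule sum.reindex_bij_betw[OF SI_Suc_bij])
  also have "\<dots> = (\<Sum>k\<le>D. \<Sum>I\<in>SI n (D - k). f (I(n := k)))"
    by (subst sum.Sigma[symmetric]) (auto simp: finite_SI)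
  finally show ?thesis .
qed

lemma sum_MI_Suc:
  "(\<Sum>I\<in>multi_idx (Suc n) D. f I) = (\<Sum>k\<le>D. \<Sum>I\<in>multi_idx n (D - k). f (I(n := k)))"
proof -
  have "(\<Sum>I\<in>multi_idx (Suc n) D. f I) = (\<Sum>I\<in>multi_idx (Suc n) D. (\<lambda>(k, J). f (J(n:=k))) (I n, I(n:=0)))"
    by (intro sum.cong) auto
  also have "\<dots> = (\<Sum>z\<in>(SIGMA k:{..D}. multi_idx n (D - k)). (\<lambda>(k, J). f (J(n:=k))) z)"
    by (rule sum.reindex_bij_betw[OF MI_Suc_bij])
  also have "\<dots> = (\<Sum>k\<le>D. \<Sum>I\<in>multi_idx n (D - k). f (I(n := k)))"
    by (subst sum.Sigma[symmetric]) (auto simp: finite_MI)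
  finally show ?thesis .
qed

lemma prod_upd_Suc:
  assumes "I n = 0"
  shows "(\<Prod>i<Suc n. (x(n := y)) i ^ (I(n := k)) i) = y ^ k * (\<Prod>i<n. x i ^ I i)"
proof -
  have "(\<Prod>i<n. (x(n := y)) i ^ (I(n := k)) i) = (\<Prod>i<n. x i ^ I i)" by (intro prod.cong) auto
  then show ?thesis by (simp add: lessThan_Suc mult.commute)
qed

lemma ev_Suc:
  "ev (Suc n) D \<beta> (x(n := y)) = (\<Sum>k\<le>D. y ^ k * ev n (D - k) (\<lambda>I. \<beta> (I(n := k))) x)"
  unfolding ev_def sum_SI_Suc
  by (intro sum.cong refl) (auto simp: sum_distrib_left prod_upd_Suc SI_def mult_ac intro!: sum.cong)

lemma rho_measurable[measurable]: "rho p \<in> borel_measurable borel"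
  unfolding rho_def by measurable

lemma ev_measurable[measurable]: "ev n D \<beta> \<in> borel_measurable (PiM {..<n} (\<lambda>_. lborel))"
  unfolding ev_def by measurable

lemma W_measurable[measurable]: "(\<lambda>x. \<Prod>i<n. rho p (x i)) \<in> borel_measurable (PiM {..<n} (\<lambda>_. lborel))"
  by measurable

interpretation PL: product_sigma_finite "\<lambda>_::nat. lborel :: real measure"
  by standard

lemma SI_mono: "a \<le> b \<Longrightarrow> SI n a \<subseteq> SI n b"
  unfolding SI_def by auto

lemma B_as_ev:
  assumes e0: "\<forall>k j. k < j \<longrightarrow> e k j = 0"
  shows "(\<Sum>k\<le>D. e k j * ev n (D - k) (\<lambda>I. \<beta> (I(n := k))) x)
       = ev n (D - j) (\<lambda>I. \<Sum>k\<le>D. e k j * (if I \<in> SI n (D - k) then \<beta> (I(n := k)) else 0)) x"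
proof -
  have "(\<Sum>k\<le>D. e k j * ev n (D - k) (\<lambda>I. \<beta> (I(n := k))) x)
      = (\<Sum>k\<le>D. \<Sum>I\<in>SI n (D - j). e k j * ((if I \<in> SI n (D - k) then \<beta> (I(n := k)) else 0) * (\<Prod>i<n. x i ^ I i)))"
  proof (intro sum.cong refl)
    fix k assume k: "k \<in> {..D}"
    show "e k j * ev n (D - k) (\<lambda>I. \<beta> (I(n := k))) x =
        (\<Sum>I\<in>SI n (D - j). e k j * ((if I \<in> SI n (D - k) then \<beta> (I(n := k)) else 0) * (\<Prod>i<n. x i ^ I i)))"
    proof (cases "k < j")
      case True then show ?thesis using e0 by simp
    next
      case False
      then have sub: "SI n (D - k) \<subseteq> SI n (D - j)" by (intro SI_mono) auto
      have "ev n (D - k) (\<lambda>I. \<beta> (I(n := k))) x =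
          (\<Sum>I\<in>SI n (D - j). (if I \<in> SI n (D - k) then \<beta> (I(n := k)) else 0) * (\<Prod>i<n. x i ^ I i))"
        unfolding ev_def using sub by (intro sum.mono_neutral_cong_left) (auto simp: finite_SI)
      then show ?thesis by (simp add: sum_distrib_left)
    qed
  qed
  also have "\<dots> = (\<Sum>I\<in>SI n (D - j). \<Sum>k\<le>D. e k j * ((if I \<in> SI n (D - k) then \<beta> (I(n := k)) else 0) * (\<Prod>i<n. x i ^ I i)))"
    by (rule sum.swap)
  also have "\<dots> = ev n (D - j) (\<lambda>I. \<Sum>k\<le>D. e k j * (if I \<in> SI n (D - k) then \<beta> (I(n := k)) else 0)) x"
    unfolding ev_def by (simp add: sum_distrib_right mult.assoc)
  finally show ?thesis .
qed

lemma gamma_top: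
  fixes e :: "nat \<Rightarrow> nat \<Rightarrow> real" and \<beta> :: "(nat \<Rightarrow> nat) \<Rightarrow> real"
  assumes e0: "\<forall>k j. k < j \<longrightarrow> e k j = 0" and ejj: "e j j = 1"
    and jD: "j \<le> D" and I: "I \<in> multi_idx n (D - j)"
  shows "(\<Sum>k\<le>D. e k j * (if I \<in> SI n (D - k) then \<beta> (I(n := k)) else 0)) = \<beta> (I(n := j))"
proof -
  have sI: "(\<Sum>i<n. I i) = D - j" and zI: "\<forall>i\<ge>n. I i = 0" using I by (auto simp: multi_idx_def)
  have "(\<Sum>k\<le>D. e k j * (if I \<in> SI n (D - k) then \<beta> (I(n := k)) else 0))
      = e j j * (if I \<in> SI n (D - j) then \<beta> (I(n := j)) else 0)"
  proof -
    have r: "(\<Sum>k\<le>D. e k j * (if I \<in> SI n (D - k) then \<beta> (I(n := k)) else 0))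
       = e j j * (if I \<in> SI n (D - j) then \<beta> (I(n := j)) else 0) +
         (\<Sum>k\<in>{..D} - {j}. e k j * (if I \<in> SI n (D - k) then \<beta> (I(n := k)) else 0))"
      by (rule sum.remove) (use jD in auto)
    have z: "(\<Sum>k\<in>{..D} - {j}. e k j * (if I \<in> SI n (D - k) then \<beta> (I(n := k)) else 0)) = 0"
    proof (intro sum.neutral ballI)
      fix k assume k: "k \<in> {..D} - {j}"
      show "e k j * (if I \<in> SI n (D - k) then \<beta> (I(n := k)) else 0) = 0"
      proof (cases "k < j")
        case True then show ?thesis using e0 by simp
      next
        case False
        then have "k > j" using k by auto
        then have "I \<notin> SI n (D - k)" using sI jD k by (auto simp: SI_def)
        then show ?thesis by simp
      qed
    qed
    show ?thesis using r z by simp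
  qed
  also have "\<dots> = \<beta> (I(n := j))" using ejj sI zI by (simp add: SI_def)
  finally show ?thesis .
qed

lemma polysum_rho_integrable:
  assumes p: "p \<ge> 1"
  shows "integrable lborel (\<lambda>y. (\<Sum>k\<le>D. y ^ k * A k)\<^sup>2 * rho p y)"
proof -
  define R where "R = (\<Sum>k\<le>D. monom (A k) k)"
  have "(\<Sum>k\<le>D. y ^ k * A k) = poly R y" for y
    unfolding R_def by (simp add: poly_sum poly_monom mult.commute)
  then show ?thesis using poly_rho_integrable[OF p, of "R^2"] by (simp add: poly_power)
qed

lemma cd_weight:
  assumes "j \<le> D"
  shows "cd d ^ D \<le> (if j = 0 then 1 else cd d) * cd d ^ (D - j)"
proof (cases "j = 0")
  case True then show ?thesis by simp
next
  case False
  have "cd d * cd d ^ (D - j) = cd d ^ (Suc (D - j))" by simp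
  moreover have "cd d ^ D \<le> cd d ^ (Suc (D - j))"
    using False assms cd_pos[of d] cd_le1[of d] by (intro power_decreasing) auto
  ultimately show ?thesis using False by simp
qed

lemma prod_lower:
  assumes p: "p \<ge> 1"
  shows "\<forall>D\<le>d. \<forall>\<beta>. ennreal (cd d ^ D * (\<Sum>I\<in>multi_idx n D. (\<beta> I)\<^sup>2)) \<le>
     (\<integral>\<^sup>+ x. ennreal ((ev n D \<beta> x)\<^sup>2 * (\<Prod>i<n. rho p (x i))) \<partial>PiM {..<n} (\<lambda>_. lborel))"
proof -
  obtain e where e0: "\<forall>k j. k < j \<longrightarrow> e k j = 0" and e1: "\<forall>j\<le>d. e j j = 1"
    and uk: "\<forall>D\<le>d. \<forall>A. (\<Sum>j\<le>D. (if j = 0 then 1 else cd d) * (\<Sum>k\<le>D. e k j * A k)\<^sup>2)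
        \<le> (\<integral>y. (\<Sum>k\<le>D. y ^ k * A k)\<^sup>2 * rho p y \<partial>lborel)"
    using univariate_key[OF p, of d] by blast
  have rnn: "\<And>y. 0 \<le> rho p y" using rho_nonneg[OF p] .
  show ?thesis
  proof (induction n)
    case 0
    show ?case
    proof (intro allI impI)
      fix D \<beta> assume D: "D \<le> d"
      have "(\<integral>\<^sup>+ x. ennreal ((ev 0 D \<beta> x)\<^sup>2 * (\<Prod>i<0. rho p (x i))) \<partial>PiM {..<0} (\<lambda>_. lborel))
          = ennreal ((\<beta> (\<lambda>_. 0))\<^sup>2)"
        by (simp add: PL.nn_integral_empty ev_def SI_0 PiM_empty)
      moreover have "cd d ^ D * (\<Sum>I\<in>multi_idx 0 D. (\<beta> I)\<^sup>2) \<le> (\<beta> (\<lambda>_. 0))\<^sup>2"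
        by (simp add: MI_0)
      ultimately show "ennreal (cd d ^ D * (\<Sum>I\<in>multi_idx 0 D. (\<beta> I)\<^sup>2)) \<le>
        (\<integral>\<^sup>+ x. ennreal ((ev 0 D \<beta> x)\<^sup>2 * (\<Prod>i<0. rho p (x i))) \<partial>PiM {..<0} (\<lambda>_. lborel))"
        by (simp add: ennreal_leI)
    qed
  next
    case (Suc n)
    show ?case
    proof (intro allI impI)
      fix D \<beta> assume D: "D \<le> d"
      define W where "W x = (\<Prod>i<n. rho p (x i))" for x :: "nat \<Rightarrow> real"
      define A where "A x k = ev n (D - k) (\<lambda>I. \<beta> (I(n := k))) x" for x k
      define \<gamma> where "\<gamma> j I = (\<Sum>k\<le>D. e k j * (if I \<in> SI n (D - k) then \<beta> (I(n := k)) else 0))" for j I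
      define w where "w j = (if j = 0 then 1 else cd d)" for j :: nat
      have Wnn: "0 \<le> W x" for x unfolding W_def using rnn by (simp add: prod_nonneg)
      have wnn: "0 \<le> w j" for j unfolding w_def using cd_pos[of d] by simp
      have Bj: "(\<Sum>k\<le>D. e k j * A x k) = ev n (D - j) (\<gamma> j) x" for x j
        unfolding A_def \<gamma>_def by (rule B_as_ev[OF e0])
      have inner: "ennreal (W x * (\<Sum>j\<le>D. w j * (ev n (D - j) (\<gamma> j) x)\<^sup>2))
          \<le> (\<integral>\<^sup>+ y. ennreal ((ev (Suc n) D \<beta> (x(n := y)))\<^sup>2 * (\<Prod>i<Suc n. rho p ((x(n := y)) i))) \<partial>lborel)" for x
      proof -
        have eqF: "(ev (Suc n) D \<beta> (x(n := y)))\<^sup>2 * (\<Prod>i<Suc n. rho p ((x(n := y)) i))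
             = W x * ((\<Sum>k\<le>D. y ^ k * A x k)\<^sup>2 * rho p y)" for y
        proof -
          have "(\<Prod>i<Suc n. rho p ((x(n := y)) i)) = W x * rho p y"
            unfolding W_def by (simp add: lessThan_Suc)
          then show ?thesis unfolding ev_Suc A_def by simp
        qed
        have "(\<integral>\<^sup>+ y. ennreal ((ev (Suc n) D \<beta> (x(n := y)))\<^sup>2 * (\<Prod>i<Suc n. rho p ((x(n := y)) i))) \<partial>lborel)
            = (\<integral>\<^sup>+ y. ennreal (W x) * ennreal ((\<Sum>k\<le>D. y ^ k * A x k)\<^sup>2 * rho p y) \<partial>lborel)"
          unfolding eqF by (intro nn_integral_cong) (use Wnn rnn in \<open>simp add: ennreal_mult\<close>)
        also have "\<dots> = ennreal (W x) * (\<integral>\<^sup>+ y. ennreal ((\<Sum>k\<le>D. y ^ k * A x k)\<^sup>2 * rho p y) \<partial>lborel)"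
          by (rule nn_integral_cmult) measurable
        also have "(\<integral>\<^sup>+ y. ennreal ((\<Sum>k\<le>D. y ^ k * A x k)\<^sup>2 * rho p y) \<partial>lborel)
            = ennreal (\<integral>y. (\<Sum>k\<le>D. y ^ k * A x k)\<^sup>2 * rho p y \<partial>lborel)"
          by (rule nn_integral_eq_integral[OF polysum_rho_integrable[OF p]]) (use rnn in auto)
        finally have *: "(\<integral>\<^sup>+ y. ennreal ((ev (Suc n) D \<beta> (x(n := y)))\<^sup>2 * (\<Prod>i<Suc n. rho p ((x(n := y)) i))) \<partial>lborel)
          = ennreal (W x) * ennreal (\<integral>y. (\<Sum>k\<le>D. y ^ k * A x k)\<^sup>2 * rho p y \<partial>lborel)" .
        have "(\<Sum>j\<le>D. w j * (ev n (D - j) (\<gamma> j) x)\<^sup>2) \<le> (\<integral>y. (\<Sum>k\<le>D. y ^ k * A x k)\<^sup>2 * rho p y \<partial>lborel)"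
          using uk D unfolding w_def Bj[symmetric] by blast
        then have "W x * (\<Sum>j\<le>D. w j * (ev n (D - j) (\<gamma> j) x)\<^sup>2) \<le> W x * (\<integral>y. (\<Sum>k\<le>D. y ^ k * A x k)\<^sup>2 * rho p y \<partial>lborel)"
          using Wnn by (intro mult_left_mono) auto
        moreover have I0: "0 \<le> (\<integral>y. (\<Sum>k\<le>D. y ^ k * A x k)\<^sup>2 * rho p y \<partial>lborel)"
          using rnn by (intro Bochner_Integration.integral_nonneg) simp
        moreover have "ennreal (W x) * ennreal (\<integral>y. (\<Sum>k\<le>D. y ^ k * A x k)\<^sup>2 * rho p y \<partial>lborel)
            = ennreal (W x * (\<integral>y. (\<Sum>k\<le>D. y ^ k * A x k)\<^sup>2 * rho p y \<partial>lborel))"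
          by (rule ennreal_mult[symmetric]) (use Wnn I0 in auto)
        ultimately show ?thesis unfolding * by (simp add: ennreal_leI)
      qed
      have s1: "(\<integral>\<^sup>+ x. ennreal ((ev (Suc n) D \<beta> x)\<^sup>2 * (\<Prod>i<Suc n. rho p (x i))) \<partial>PiM {..<Suc n} (\<lambda>_. lborel))
          = (\<integral>\<^sup>+ x. (\<integral>\<^sup>+ y. ennreal ((ev (Suc n) D \<beta> (x(n := y)))\<^sup>2 * (\<Prod>i<Suc n. rho p ((x(n := y)) i))) \<partial>lborel) \<partial>PiM {..<n} (\<lambda>_. lborel))"
        unfolding lessThan_Suc by (rule PL.product_nn_integral_insert) (auto simp flip: lessThan_Suc)
      have s2: "(\<integral>\<^sup>+ x. ennreal (W x * (\<Sum>j\<le>D. w j * (ev n (D - j) (\<gamma> j) x)\<^sup>2)) \<partial>PiM {..<n} (\<lambda>_. lborel)) \<le> (\<integral>\<^sup>+ x. (\<integral>\<^sup>+ y. ennreal ((ev (Suc n) D \<beta> (x(n := y)))\<^sup>2 * (\<Prod>i<Suc n. rho p ((x(n := y)) i))) \<partial>lborel) \<partial>PiM {..<n} (\<lambda>_. lborel))"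
        by (intro nn_integral_mono inner)
      have s3: "(\<integral>\<^sup>+ x. ennreal (W x * (\<Sum>j\<le>D. w j * (ev n (D - j) (\<gamma> j) x)\<^sup>2)) \<partial>PiM {..<n} (\<lambda>_. lborel))
          = (\<Sum>j\<le>D. ennreal (w j) * (\<integral>\<^sup>+ x. ennreal ((ev n (D - j) (\<gamma> j) x)\<^sup>2 * W x) \<partial>PiM {..<n} (\<lambda>_. lborel)))"
      proof -
        have "(\<integral>\<^sup>+ x. ennreal (W x * (\<Sum>j\<le>D. w j * (ev n (D - j) (\<gamma> j) x)\<^sup>2)) \<partial>PiM {..<n} (\<lambda>_. lborel))
          = (\<integral>\<^sup>+ x. (\<Sum>j\<le>D. ennreal (w j) * ennreal ((ev n (D - j) (\<gamma> j) x)\<^sup>2 * W x)) \<partial>PiM {..<n} (\<lambda>_. lborel))"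
          using Wnn wnn by (intro nn_integral_cong) (simp add: sum_distrib_left ennreal_mult[symmetric] sum_ennreal mult_ac)
        also have "\<dots> = (\<Sum>j\<le>D. (\<integral>\<^sup>+ x. ennreal (w j) * ennreal ((ev n (D - j) (\<gamma> j) x)\<^sup>2 * W x) \<partial>PiM {..<n} (\<lambda>_. lborel)))"
          by (rule nn_integral_sum) (auto simp: W_def)
        also have "\<dots> = (\<Sum>j\<le>D. ennreal (w j) * (\<integral>\<^sup>+ x. ennreal ((ev n (D - j) (\<gamma> j) x)\<^sup>2 * W x) \<partial>PiM {..<n} (\<lambda>_. lborel)))"
          by (intro sum.cong refl nn_integral_cmult) (auto simp: W_def)
        finally show ?thesis .
      qed
      have s4: "(\<Sum>j\<le>D. ennreal (w j) * ennreal (cd d ^ (D - j) * (\<Sum>I\<in>multi_idx n (D - j). (\<gamma> j I)\<^sup>2))) \<le> (\<Sum>j\<le>D. ennreal (w j) * (\<integral>\<^sup>+ x. ennreal ((ev n (D - j) (\<gamma> j) x)\<^sup>2 * W x) \<partial>PiM {..<n} (\<lambda>_. lborel)))"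
      proof (intro sum_mono mult_left_mono)
        fix j assume j: "j \<in> {..D}"
        show "ennreal (cd d ^ (D - j) * (\<Sum>I\<in>multi_idx n (D - j). (\<gamma> j I)\<^sup>2))
            \<le> (\<integral>\<^sup>+ x. ennreal ((ev n (D - j) (\<gamma> j) x)\<^sup>2 * W x) \<partial>PiM {..<n} (\<lambda>_. lborel))"
          using Suc.IH D unfolding W_def by auto
      qed auto
      have s5: "(\<Sum>j\<le>D. ennreal (w j) * ennreal (cd d ^ (D - j) * (\<Sum>I\<in>multi_idx n (D - j). (\<gamma> j I)\<^sup>2)))
          = ennreal (\<Sum>j\<le>D. w j * cd d ^ (D - j) * (\<Sum>I\<in>multi_idx n (D - j). (\<beta> (I(n := j)))\<^sup>2))"
      proof -
        have g: "(\<Sum>I\<in>multi_idx n (D - j). (\<gamma> j I)\<^sup>2) = (\<Sum>I\<in>multi_idx n (D - j). (\<beta> (I(n := j)))\<^sup>2)"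
          if "j \<le> D" for j
          unfolding \<gamma>_def using gamma_top[OF e0, of j D] e1 that D by (intro sum.cong refl) auto
        have nn: "0 \<le> cd d ^ (D - j) * (\<Sum>I\<in>multi_idx n (D - j). (\<beta> (I(n := j)))\<^sup>2)" for j
          using cd_pos[of d] by (intro mult_nonneg_nonneg sum_nonneg) auto
        have "(\<Sum>j\<le>D. ennreal (w j) * ennreal (cd d ^ (D - j) * (\<Sum>I\<in>multi_idx n (D - j). (\<gamma> j I)\<^sup>2)))
           = (\<Sum>j\<le>D. ennreal (w j * (cd d ^ (D - j) * (\<Sum>I\<in>multi_idx n (D - j). (\<beta> (I(n := j)))\<^sup>2))))"
        proof (intro sum.cong refl)
          fix j assume "j \<in> {..D}"
          then show "ennreal (w j) * ennreal (cd d ^ (D - j) * (\<Sum>I\<in>multi_idx n (D - j). (\<gamma> j I)\<^sup>2))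
             = ennreal (w j * (cd d ^ (D - j) * (\<Sum>I\<in>multi_idx n (D - j). (\<beta> (I(n := j)))\<^sup>2)))"
            using g[of j] wnn[of j] nn[of j] by (simp add: ennreal_mult)
        qed
        also have "\<dots> = ennreal (\<Sum>j\<le>D. w j * (cd d ^ (D - j) * (\<Sum>I\<in>multi_idx n (D - j). (\<beta> (I(n := j)))\<^sup>2)))"
          by (rule sum_ennreal) (use wnn nn in \<open>auto intro: mult_nonneg_nonneg\<close>)
        finally show ?thesis by (simp add: mult.assoc)
      qed
      have s6: "ennreal (cd d ^ D * (\<Sum>I\<in>multi_idx (Suc n) D. (\<beta> I)\<^sup>2)) \<le> ennreal (\<Sum>j\<le>D. w j * cd d ^ (D - j) * (\<Sum>I\<in>multi_idx n (D - j). (\<beta> (I(n := j)))\<^sup>2))"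
      proof (rule ennreal_leI)
        have "cd d ^ D * (\<Sum>I\<in>multi_idx (Suc n) D. (\<beta> I)\<^sup>2)
            = (\<Sum>j\<le>D. cd d ^ D * (\<Sum>I\<in>multi_idx n (D - j). (\<beta> (I(n := j)))\<^sup>2))"
          by (simp add: sum_MI_Suc sum_distrib_left)
        also have "\<dots> \<le> (\<Sum>j\<le>D. w j * cd d ^ (D - j) * (\<Sum>I\<in>multi_idx n (D - j). (\<beta> (I(n := j)))\<^sup>2))"
          unfolding w_def by (intro sum_mono mult_right_mono cd_weight sum_nonneg) auto
        finally show "cd d ^ D * (\<Sum>I\<in>multi_idx (Suc n) D. (\<beta> I)\<^sup>2)
            \<le> (\<Sum>j\<le>D. w j * cd d ^ (D - j) * (\<Sum>I\<in>multi_idx n (D - j). (\<beta> (I(n := j)))\<^sup>2))" .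
      qed
      show "ennreal (cd d ^ D * (\<Sum>I\<in>multi_idx (Suc n) D. (\<beta> I)\<^sup>2)) \<le>
        (\<integral>\<^sup>+ x. ennreal ((ev (Suc n) D \<beta> x)\<^sup>2 * (\<Prod>i<Suc n. rho p (x i))) \<partial>PiM {..<Suc n} (\<lambda>_. lborel))"
        using order_trans[OF order_trans[OF s6[folded s5] s4, folded s3] s2, folded s1] .
    qed
  qed
qed

abbreviation PL :: "nat \<Rightarrow> (nat \<Rightarrow> real) measure" where
  "PL n \<equiv> PiM {..<n} (\<lambda>_. lborel)"

definition scl :: "nat \<Rightarrow> real \<Rightarrow> (nat \<Rightarrow> real) \<Rightarrow> (nat \<Rightarrow> real)" where
  "scl n t x = restrict (\<lambda>i. t * x i) {..<n}"

lemma scl_measurable[measurable]: "scl n t \<in> measurable (PL n) (PL n)"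
  unfolding scl_def by measurable

lemma scl_Suc: "(scl n t x)(n := t * y) = scl (Suc n) t (x(n := y))"
  unfolding scl_def by (auto simp: restrict_def)

lemma H_measurable:
  assumes [measurable]: "h \<in> borel_measurable (PL (Suc n))"
  shows "(\<lambda>x. \<integral>\<^sup>+ y. h (x(n := t * y)) \<partial>lborel) \<in> borel_measurable (PL n)"
proof -
  have [measurable]: "h \<in> borel_measurable (PiM (insert n {..<n}) (\<lambda>_. lborel))"
    using assms by (simp add: lessThan_Suc)
  have m1: "(\<lambda>z. (fst z)(n := t * snd z)) \<in> measurable (PL n \<Otimes>\<^sub>M lborel) (PiM (insert n {..<n}) (\<lambda>_. lborel))"
    by (rule measurable_fun_upd[where J="{..<n}"]) auto
  have "(\<lambda>z. h ((fst z)(n := t * snd z))) \<in> borel_measurable (PL n \<Otimes>\<^sub>M lborel)"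
    by (rule measurable_compose[OF m1]) measurable
  moreover have "(\<lambda>z. h ((fst z)(n := t * snd z))) = (\<lambda>(x, y). h (x(n := t * y)))" by auto
  ultimately have [measurable]: "(\<lambda>(x, y). h (x(n := t * y))) \<in> borel_measurable (PL n \<Otimes>\<^sub>M lborel)"
    by simp
  show ?thesis by measurable
qed

lemma scale_nn:
  assumes t: "t > 0"
  shows "h \<in> borel_measurable (PL n) \<Longrightarrow>
    (\<integral>\<^sup>+ x. h x \<partial>PL n) = ennreal (t ^ n) * (\<integral>\<^sup>+ x. h (scl n t x) \<partial>PL n)"
proof (induction n arbitrary: h)
  case 0
  have "scl 0 t (\<lambda>k. undefined) = (\<lambda>k. undefined)" unfolding scl_def by auto
  then show ?case by (simp add: PL.nn_integral_empty)
next
  case (Suc n)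
  note hm[measurable] = Suc.prems
  have hm'[measurable]: "h \<in> borel_measurable (PiM (insert n {..<n}) (\<lambda>_. lborel))"
    using hm by (simp add: lessThan_Suc)
  define H where "H x = (\<integral>\<^sup>+ y. h (x(n := t * y)) \<partial>lborel)" for x
  have Hm[measurable]: "H \<in> borel_measurable (PL n)" unfolding H_def by (rule H_measurable[OF hm])
  have hsm[measurable]: "(\<lambda>x. h (scl (Suc n) t x)) \<in> borel_measurable (PiM (insert n {..<n}) (\<lambda>_. lborel))"
    using measurable_compose[OF scl_measurable[of "Suc n" t] hm] by (simp add: lessThan_Suc)
  have "(\<integral>\<^sup>+ x. h x \<partial>PL (Suc n)) = (\<integral>\<^sup>+ x. (\<integral>\<^sup>+ y. h (x(n := y)) \<partial>lborel) \<partial>PL n)"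
    unfolding lessThan_Suc by (rule PL.product_nn_integral_insert) auto
  also have "\<dots> = (\<integral>\<^sup>+ x. ennreal t * H x \<partial>PL n)"
  proof (rule nn_integral_cong)
    fix x assume x: "x \<in> space (PL n)"
    have [measurable]: "(\<lambda>y. h (x(n := y))) \<in> borel_measurable borel"
      using measurable_compose[OF measurable_component_update[OF x, of n] hm'] by simp
    show "(\<integral>\<^sup>+ y. h (x(n := y)) \<partial>lborel) = ennreal t * H x"
      unfolding H_def using nn_integral_real_affine[of "\<lambda>y. h (x(n := y))" t 0] t by simp
  qed
  also have "\<dots> = ennreal t * (\<integral>\<^sup>+ x. H x \<partial>PL n)" by (rule nn_integral_cmult) measurable
  also have "(\<integral>\<^sup>+ x. H x \<partial>PL n) = ennreal (t ^ n) * (\<integral>\<^sup>+ x. H (scl n t x) \<partial>PL n)"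
    by (rule Suc.IH) measurable
  also have "(\<integral>\<^sup>+ x. H (scl n t x) \<partial>PL n) = (\<integral>\<^sup>+ x. (\<integral>\<^sup>+ y. h (scl (Suc n) t (x(n := y))) \<partial>lborel) \<partial>PL n)"
    unfolding H_def scl_Suc ..
  also have "\<dots> = (\<integral>\<^sup>+ x. h (scl (Suc n) t x) \<partial>PL (Suc n))"
    unfolding lessThan_Suc by (rule PL.product_nn_integral_insert[symmetric]) auto
  finally show ?case using t by (simp add: ennreal_mult mult.assoc)
qed

definition Nn :: "nat \<Rightarrow> real \<Rightarrow> (nat \<Rightarrow> real) \<Rightarrow> real" where
  "Nn n p x = (\<Sum>i<n. \<bar>x i\<bar> powr p)"

lemma Nn_measurable[measurable]: "Nn n p \<in> borel_measurable (PL n)"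
  unfolding Nn_def by measurable

lemma Nn_nonneg: "0 \<le> Nn n p x"
  unfolding Nn_def by (simp add: sum_nonneg)

lemma Nn_scl: "t > 0 \<Longrightarrow> Nn n p (scl n t x) = t powr p * Nn n p x"
  unfolding Nn_def scl_def by (simp add: sum_distrib_left abs_mult powr_mult)

definition Fs :: "nat \<Rightarrow> real \<Rightarrow> ((nat \<Rightarrow> real) \<Rightarrow> ennreal) \<Rightarrow> real \<Rightarrow> ennreal" where
  "Fs n p G s = (\<integral>\<^sup>+ x. G x * indicator {x. Nn n p x \<le> s} x \<partial>PL n)"

lemma F_scale:
  assumes p: "p > 0" and s: "s > 0" and Gm[measurable]: "G \<in> borel_measurable (PL n)"
    and hom: "\<And>x t. t > 0 \<Longrightarrow> G (scl n t x) = ennreal (t ^ m) * G x"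
  shows "Fs n p G s = ennreal (s powr ((real n + real m) / p)) * Fs n p G 1"
proof -
  define t where "t = s powr (1 / p)"
  have t: "t > 0" unfolding t_def using s by simp
  have tp: "t powr p = s" unfolding t_def using s p by (simp add: powr_powr)
  have "Fs n p G s = ennreal (t ^ n) * (\<integral>\<^sup>+ x. G (scl n t x) * indicator {x. Nn n p x \<le> s} (scl n t x) \<partial>PL n)"
    unfolding Fs_def by (rule scale_nn[OF t]) measurable
  also have "(\<integral>\<^sup>+ x. G (scl n t x) * indicator {x. Nn n p x \<le> s} (scl n t x) \<partial>PL n)
      = (\<integral>\<^sup>+ x. ennreal (t ^ m) * (G x * indicator {x. Nn n p x \<le> 1} x) \<partial>PL n)"
  proof (intro nn_integral_cong)
    fix x
    have "(Nn n p (scl n t x) \<le> s) = (Nn n p x \<le> 1)"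
      using Nn_scl[OF t] tp s by (simp add: mult_le_cancel_left1)
    then show "G (scl n t x) * indicator {x. Nn n p x \<le> s} (scl n t x) = ennreal (t ^ m) * (G x * indicator {x. Nn n p x \<le> 1} x)"
      using hom[OF t] by (simp add: indicator_def mult.assoc)
  qed
  also have "\<dots> = ennreal (t ^ m) * Fs n p G 1"
    unfolding Fs_def by (rule nn_integral_cmult) measurable
  finally have "Fs n p G s = ennreal (t ^ n * t ^ m) * Fs n p G 1"
    using t by (simp add: ennreal_mult mult.assoc)
  also have "t ^ n * t ^ m = s powr ((real n + real m) / p)"
    unfolding t_def using s by (simp add: powr_realpow[symmetric] powr_powr powr_add[symmetric] add_divide_distrib)
  finally show ?thesis .
qed

lemma exp_int_0: "(\<integral>\<^sup>+ s. ennreal (indicator {0..} s * exp (- s)) \<partial>lborel) = 1"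
proof -
  have "(\<integral>\<^sup>+ s. ennreal (indicator {0..} s * exp (- s)) \<partial>lborel)
      = (\<integral>\<^sup>+ t. ennreal (indicator {0..} t * t powr (1 - 1) / exp t) \<partial>lborel)"
    by (intro nn_integral_cong_AE, use AE_lborel_singleton[of 0] in eventually_elim)
       (auto simp: indicator_def exp_minus field_simps)
  also have "\<dots> = 1" using Gamma_conv_nn_integral_real[of 1] by simp
  finally show ?thesis .
qed

lemma exp_tail: "ennreal (exp (- a)) = (\<integral>\<^sup>+ s. ennreal (indicator {a..} s * exp (- s)) \<partial>lborel)"
proof -
  have "(\<integral>\<^sup>+ s. ennreal (indicator {a..} s * exp (- s)) \<partial>lborel)
      = (\<integral>\<^sup>+ s. ennreal (indicator {a..} (a + 1 * s) * exp (- (a + 1 * s))) \<partial>lborel)"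
    using nn_integral_real_affine[of "\<lambda>s. ennreal (indicator {a..} s * exp (- s))" 1 a] by simp
  also have "\<dots> = (\<integral>\<^sup>+ s. ennreal (exp (- a)) * ennreal (indicator {0..} s * exp (- s)) \<partial>lborel)"
    by (intro nn_integral_cong) (auto simp: indicator_def mult_exp_exp ennreal_mult[symmetric])
  also have "\<dots> = ennreal (exp (- a)) * (\<integral>\<^sup>+ s. ennreal (indicator {0..} s * exp (- s)) \<partial>lborel)"
    by (rule nn_integral_cmult) measurable
  finally show ?thesis by (simp add: exp_int_0)
qed

lemma Gamma_tail:
  assumes "a \<ge> 0"
  shows "(\<integral>\<^sup>+ s. ennreal (indicator {0<..} s * s powr a * exp (- s)) \<partial>lborel) = ennreal (Gamma (a + 1))"
proof -
  have "(\<integral>\<^sup>+ s. ennreal (indicator {0<..} s * s powr a * exp (- s)) \<partial>lborel)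
      = (\<integral>\<^sup>+ t. ennreal (indicator {0..} t * t powr (a + 1 - 1) / exp t) \<partial>lborel)"
    by (intro nn_integral_cong) (auto simp: indicator_def exp_minus field_simps)
  also have "\<dots> = ennreal (Gamma (a + 1))"
    using Gamma_conv_nn_integral_real[of "a + 1"] assms by simp
  finally show ?thesis .
qed

lemma layer_cake:
  assumes p: "p > 0" and Gm[measurable]: "G \<in> borel_measurable (PL n)"
    and hom: "\<And>x t. t > 0 \<Longrightarrow> G (scl n t x) = ennreal (t ^ m) * G x"
  shows "(\<integral>\<^sup>+ x. G x * ennreal (exp (- Nn n p x)) \<partial>PL n)
       = ennreal (Gamma ((real n + real m) / p + 1)) * Fs n p G 1"
proof -
  interpret F: finite_product_sigma_finite "\<lambda>_::nat. lborel :: real measure" "{..<n}" by standard auto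
  interpret P: pair_sigma_finite "PL n" lborel by standard
  define a where "a = (real n + real m) / p"
  have a: "a \<ge> 0" unfolding a_def using p by simp
  have [measurable]: "(\<lambda>(x, s). G x * ennreal (indicator {Nn n p x..} s * exp (- s))) \<in> borel_measurable (PL n \<Otimes>\<^sub>M lborel)"
  proof -
    have "(\<lambda>(x, s). G x * ennreal (indicator {Nn n p x..} s * exp (- s))) =
        (\<lambda>(x, s). G x * ennreal ((if Nn n p x \<le> s then 1 else 0) * exp (- s)))"
      by (auto simp: indicator_def fun_eq_iff)
    also have "\<dots> \<in> borel_measurable (PL n \<Otimes>\<^sub>M lborel)" by measurable
    finally show ?thesis .
  qed
  have "(\<integral>\<^sup>+ x. G x * ennreal (exp (- Nn n p x)) \<partial>PL n)
      = (\<integral>\<^sup>+ x. (\<integral>\<^sup>+ s. G x * ennreal (indicator {Nn n p x..} s * exp (- s)) \<partial>lborel) \<partial>PL n)"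
    by (intro nn_integral_cong) (simp add: exp_tail[of "Nn n p _"] nn_integral_cmult)
  also have "\<dots> = (\<integral>\<^sup>+ s. (\<integral>\<^sup>+ x. G x * ennreal (indicator {Nn n p x..} s * exp (- s)) \<partial>PL n) \<partial>lborel)"
    by (rule P.Fubini'[symmetric]) measurable
  also have "\<dots> = (\<integral>\<^sup>+ s. ennreal (indicator {0<..} s * s powr a * exp (- s)) * Fs n p G 1 \<partial>lborel)"
  proof (intro nn_integral_cong_AE, use AE_lborel_singleton[of 0] in eventually_elim)
    fix s :: real assume s0: "s \<noteq> 0"
    have "(\<integral>\<^sup>+ x. G x * ennreal (indicator {Nn n p x..} s * exp (- s)) \<partial>PL n)
        = (\<integral>\<^sup>+ x. ennreal (exp (- s)) * (G x * indicator {x. Nn n p x \<le> s} x) \<partial>PL n)"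
      by (intro nn_integral_cong) (auto simp: indicator_def mult.commute)
    also have "\<dots> = ennreal (exp (- s)) * Fs n p G s"
      unfolding Fs_def by (rule nn_integral_cmult) measurable
    finally have eq: "(\<integral>\<^sup>+ x. G x * ennreal (indicator {Nn n p x..} s * exp (- s)) \<partial>PL n) = ennreal (exp (- s)) * Fs n p G s" .
    show "(\<integral>\<^sup>+ x. G x * ennreal (indicator {Nn n p x..} s * exp (- s)) \<partial>PL n)
        = ennreal (indicator {0<..} s * s powr a * exp (- s)) * Fs n p G 1"
    proof (cases "s > 0")
      case True
      have "Fs n p G s = ennreal (s powr a) * Fs n p G 1"
        unfolding a_def by (rule F_scale[OF p True Gm hom])
      then show ?thesis using True unfolding eq by (simp add: ennreal_mult mult_ac)
    next
      case False
      then have "s < 0" using s0 by simp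
      then have "{x. Nn n p x \<le> s} = {}"
        using Nn_nonneg[of n p] by (auto simp: not_le intro: less_le_trans)
      then have "Fs n p G s = 0" unfolding Fs_def by simp
      then show ?thesis using False unfolding eq by simp
    qed
  qed
  also have "\<dots> = (\<integral>\<^sup>+ s. ennreal (indicator {0<..} s * s powr a * exp (- s)) \<partial>lborel) * Fs n p G 1"
    by (rule nn_integral_multc) measurable
  also have "\<dots> = ennreal (Gamma (a + 1)) * Fs n p G 1" by (simp add: Gamma_tail[OF a])
  finally show ?thesis unfolding a_def .
qed

lemma Gamma_shift_le1:
  fixes x b :: real
  assumes x: "x > 0" and b: "0 \<le> b" "b \<le> 1"
  shows "Gamma (x + b) \<le> x powr b * Gamma x"
proof -
  have gp: "Gamma x > 0" using x by (rule Gamma_real_pos)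
  then have gne: "Gamma x \<noteq> 0" by simp
  have cv: "convex_on {0<..} (ln \<circ> Gamma :: real \<Rightarrow> real)" by (rule log_convex_Gamma_real)
  have "(ln \<circ> Gamma) ((1 - b) *\<^sub>R x + b *\<^sub>R (x + 1)) \<le> (1 - b) * (ln \<circ> Gamma) x + b * (ln \<circ> Gamma) (x + 1)"
    by (rule convex_onD[OF cv]) (use x b in auto)
  moreover have "(1 - b) *\<^sub>R x + b *\<^sub>R (x + 1) = x + b" by (simp add: algebra_simps)
  moreover have "Gamma (x + 1) = x * Gamma x" using Gamma_plus1[of x] x nonpos_Ints_nonpos[of x] by auto
  ultimately have "ln (Gamma (x + b)) \<le> ln (Gamma x) + b * ln x"
    using x gne by (simp add: ln_mult algebra_simps)
  then have "exp (ln (Gamma (x + b))) \<le> exp (ln (Gamma x) + b * ln x)" by simp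
  moreover have "Gamma (x + b) > 0" using x b by (intro Gamma_real_pos) auto
  ultimately show ?thesis using gp x by (simp add: exp_add powr_def mult.commute)
qed

lemma Gamma_shift_le:
  shows "\<forall>x b. x > 0 \<longrightarrow> 0 \<le> b \<longrightarrow> b \<le> real k + 1 \<longrightarrow> Gamma (x + b) \<le> (x + b) powr b * Gamma x"
proof (induction k)
  case 0
  show ?case
  proof (intro allI impI)
    fix x b :: real assume x: "x > 0" and b: "0 \<le> b" "b \<le> real 0 + 1"
    have "Gamma (x + b) \<le> x powr b * Gamma x" using Gamma_shift_le1[OF x] b by simp
    also have "\<dots> \<le> (x + b) powr b * Gamma x"
      using x b Gamma_real_pos[OF x] by (intro mult_right_mono powr_mono2) auto
    finally show "Gamma (x + b) \<le> (x + b) powr b * Gamma x" .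
  qed
next
  case (Suc k)
  show ?case
  proof (intro allI impI)
    fix x b :: real assume x: "x > 0" and b: "0 \<le> b" "b \<le> real (Suc k) + 1"
    show "Gamma (x + b) \<le> (x + b) powr b * Gamma x"
    proof (cases "b \<le> real k + 1")
      case True then show ?thesis using Suc.IH x b by blast
    next
      case False
      then have b1: "b \<ge> 1" by simp
      have "Gamma (x + b) = Gamma ((x + (b - 1)) + 1)" by simp
      also have "\<dots> = (x + (b - 1)) * Gamma (x + (b - 1))"
      proof (rule Gamma_plus1)
        show "x + (b - 1) \<notin> \<int>\<^sub>\<le>\<^sub>0" using x b1 nonpos_Ints_nonpos[of "x + (b - 1)"] by auto
      qed
      also have "\<dots> \<le> (x + (b - 1)) * ((x + (b - 1)) powr (b - 1) * Gamma x)"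
        using Suc.IH x b b1 by (intro mult_left_mono) auto
      also have "\<dots> = (x + (b - 1)) powr b * Gamma x"
        using x b1 by (simp add: powr_diff field_simps)
      also have "\<dots> \<le> (x + b) powr b * Gamma x"
        using x b1 Gamma_real_pos[OF x] by (intro mult_right_mono powr_mono2) auto
      finally show ?thesis .
    qed
  qed
qed

lemma Gamma_ratio:
  assumes p: "p \<ge> 1" and n: "real n \<ge> 1" and dn: "real d \<le> real n"
  shows "real n powr (- 2 * real d / p) / 16 ^ d \<le> Gamma (real n / p + 1) / Gamma ((real n + real (2 * d)) / p + 1)"
proof -
  define x where "x = real n / p + 1"
  define b where "b = 2 * real d / p"
  have x: "x > 0" unfolding x_def using p by (intro add_nonneg_pos divide_nonneg_nonneg) auto
  have b: "0 \<le> b" "b \<le> 2 * real d" unfolding b_def using p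
    by (auto simp: field_simps intro: order_trans[OF _ mult_right_mono[of 1 p "real d"]])
  have "b \<le> real (2 * d) + 1" using b by simp
  then have G: "Gamma (x + b) \<le> (x + b) powr b * Gamma x" using Gamma_shift_le[of "2 * d"] x b by blast
  have xb: "x + b = (real n + real (2 * d)) / p + 1" unfolding x_def b_def using p by (simp add: field_simps)
  have Gx: "Gamma x > 0" using x by (rule Gamma_real_pos)
  have Gxb: "Gamma (x + b) > 0" using x b by (intro Gamma_real_pos) auto
  have xb_le: "x + b \<le> 4 * real n"
  proof -
    have a1: "real n \<le> real n * p" using n p mult_left_mono[of 1 p "real n"] by simp
    have a2: "p \<le> real n * p" using n p mult_right_mono[of 1 "real n" p] by simp
    have "real n + 2 * real d + p \<le> 4 * real n * p" using a1 a2 dn by linarith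
    moreover have "x + b = (real n + 2 * real d + p) / p" unfolding x_def b_def using p by (simp add: field_simps)
    ultimately show ?thesis using p by (simp add: divide_le_eq mult.commute mult.left_commute)
  qed
  have "(x + b) powr b \<le> (4 * real n) powr b" using xb_le x b by (intro powr_mono2) auto
  also have "\<dots> = 4 powr b * real n powr b" using n by (simp add: powr_mult)
  also have "4 powr b \<le> 4 powr (2 * real d)" using b by (intro powr_mono) auto
  then have "4 powr b * real n powr b \<le> 4 powr (2 * real d) * real n powr b" by (intro mult_right_mono) auto
  moreover have "(4::real) powr (2 * real d) = 16 ^ d"
  proof -
    have "(4::real) powr (2 * real d) = 4 powr (real (2 * d))" by simp
    also have "\<dots> = 4 ^ (2 * d)" by (rule powr_realpow) simp
    also have "\<dots> = 16 ^ d" by (simp add: power_mult)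
    finally show ?thesis .
  qed
  ultimately have A: "(x + b) powr b \<le> 16 ^ d * real n powr b" by simp
  have "real n powr (- 2 * real d / p) / 16 ^ d = 1 / (16 ^ d * real n powr b)"
    unfolding b_def using n by (simp add: powr_minus divide_simps)
  also have "\<dots> \<le> 1 / ((x + b) powr b)"
  proof -
    have "real n powr b > 0" "(x + b) powr b > 0" using n x b by auto
    then show ?thesis using A by (intro divide_left_mono mult_pos_pos) auto
  qed
  also have "\<dots> \<le> Gamma x / Gamma (x + b)"
  proof -
    have P: "(x + b) powr b > 0" using x b by auto
    show ?thesis using G Gx Gxb P by (simp add: divide_simps mult.commute)
  qed
  finally show ?thesis unfolding xb by (simp add: x_def)
qed

lemma hom_poly_scl:
  assumes t: "t > 0"
  shows "hom_poly n d \<alpha> (scl n t x) = t ^ d * hom_poly n d \<alpha> x"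
proof -
  have "(\<Prod>i<n. scl n t x i ^ I i) = t ^ d * (\<Prod>i<n. x i ^ I i)" if I: "I \<in> multi_idx n d" for I
  proof -
    have "(\<Prod>i<n. scl n t x i ^ I i) = (\<Prod>i<n. t ^ I i * x i ^ I i)"
      unfolding scl_def by (intro prod.cong) (auto simp: power_mult_distrib)
    also have "\<dots> = (\<Prod>i<n. t ^ I i) * (\<Prod>i<n. x i ^ I i)" by (rule prod.distrib)
    also have "(\<Prod>i<n. t ^ I i) = t ^ (\<Sum>i<n. I i)" by (simp add: power_sum)
    also have "(\<Sum>i<n. I i) = d" using I by (simp add: multi_idx_def)
    finally show ?thesis .
  qed
  then show ?thesis unfolding hom_poly_def by (simp add: sum_distrib_left mult_ac)
qed

lemma hom_poly_ev:
  "hom_poly n d \<alpha> x = ev n d (\<lambda>I. if I \<in> multi_idx n d then \<alpha> I else 0) x"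
  unfolding hom_poly_def ev_def
  by (rule sum.mono_neutral_cong_left) (auto simp: finite_SI MI_sub_SI[THEN subsetD])

lemma hom_poly_measurable[measurable]: "hom_poly n d \<alpha> \<in> borel_measurable (PL n)"
  unfolding hom_poly_def by measurable

lemma exp_Nn: assumes p: "p \<ge> 1" shows "exp (- Nn n p x) = Zp p ^ n * (\<Prod>i<n. rho p (x i))"
proof -
  have Z: "Zp p > 0" by (rule Zp_pos[OF p])
  have "exp (- Nn n p x) = (\<Prod>i<n. exp (- (\<bar>x i\<bar> powr p)))"
    unfolding Nn_def by (simp add: exp_sum[symmetric] sum_negf)
  also have "\<dots> = (\<Prod>i<n. Zp p * rho p (x i))" using Z unfolding rho_def by (intro prod.cong) auto
  also have "\<dots> = Zp p ^ n * (\<Prod>i<n. rho p (x i))" by (simp add: prod.distrib)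
  finally show ?thesis .
qed

lemma int_exp_Nn: assumes p: "p \<ge> 1"
  shows "(\<integral>\<^sup>+ x. ennreal (exp (- Nn n p x)) \<partial>PL n) = ennreal (Zp p ^ n)"
proof -
  have "(\<integral>\<^sup>+ x. ennreal (exp (- Nn n p x)) \<partial>PL n) = (\<integral>\<^sup>+ x. (\<Prod>i<n. ennreal (exp (- (\<bar>x i\<bar> powr p)))) \<partial>PL n)"
    unfolding Nn_def by (intro nn_integral_cong) (simp add: exp_sum[symmetric] sum_negf prod_ennreal)
  also have "\<dots> = (\<Prod>i<n. (\<integral>\<^sup>+ y. ennreal (exp (- (\<bar>y\<bar> powr p))) \<partial>lborel))"
    by (rule PL.product_nn_integral_prod) auto
  also have "(\<integral>\<^sup>+ y. ennreal (exp (- (\<bar>y\<bar> powr p))) \<partial>lborel) = ennreal (Zp p)"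
    unfolding Zp_def
    by (rule nn_integral_eq_integral) (use mom_integrable[OF p, of 0] in auto)
  finally show ?thesis using Zp_pos[OF p] by (simp add: prod_ennreal ennreal_power)
qed

lemma coord_le1:
  assumes p: "p \<ge> 1" and N: "Nn n p x \<le> 1" and i: "i < n"
  shows "\<bar>x i\<bar> \<le> 1"
proof (rule ccontr)
  assume "\<not> \<bar>x i\<bar> \<le> 1"
  then have "1 < \<bar>x i\<bar>" by simp
  then have "1 powr p < \<bar>x i\<bar> powr p" using p by (intro powr_less_mono2) auto
  moreover have "\<bar>x i\<bar> powr p \<le> Nn n p x"
    unfolding Nn_def using i by (intro member_le_sum) auto
  ultimately show False using N by simp
qed

lemma hom_poly_bound:
  assumes p: "p \<ge> 1" and N: "Nn n p x \<le> 1"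
  shows "\<bar>hom_poly n d \<alpha> x\<bar> \<le> (\<Sum>I\<in>multi_idx n d. \<bar>\<alpha> I\<bar>)"
proof -
  have "\<bar>hom_poly n d \<alpha> x\<bar> \<le> (\<Sum>I\<in>multi_idx n d. \<bar>\<alpha> I * (\<Prod>i<n. x i ^ I i)\<bar>)"
    unfolding hom_poly_def by (rule sum_abs)
  also have "\<dots> \<le> (\<Sum>I\<in>multi_idx n d. \<bar>\<alpha> I\<bar>)"
  proof (intro sum_mono)
    fix I
    have "\<bar>\<Prod>i<n. x i ^ I i\<bar> = (\<Prod>i<n. \<bar>x i\<bar> ^ I i)" by (simp add: abs_prod power_abs)
    also have "\<dots> \<le> 1" using coord_le1[OF p N] by (intro prod_le_1) (auto simp: power_le_one)
    finally show "\<bar>\<alpha> I * (\<Prod>i<n. x i ^ I i)\<bar> \<le> \<bar>\<alpha> I\<bar>" by (simp add: abs_mult mult_left_le)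
  qed
  finally show ?thesis .
qed

lemma lp_ball_eq:
  assumes p: "p \<ge> 1"
  shows "lp_ball n p = {x \<in> space (PL n). Nn n p x \<le> 1}"
proof -
  have "(lp_norm n p x \<le> 1) = (Nn n p x \<le> 1)" for x
  proof -
    have N0: "0 \<le> Nn n p x" by (rule Nn_nonneg)
    have ln: "lp_norm n p x = Nn n p x powr (1 / p)" unfolding lp_norm_def Nn_def ..
    show ?thesis
    proof
      assume "Nn n p x \<le> 1" then show "lp_norm n p x \<le> 1" unfolding ln using N0 p by (intro powr_le1) auto
    next
      assume a: "lp_norm n p x \<le> 1"
      show "Nn n p x \<le> 1"
      proof (rule ccontr)
        assume "\<not> Nn n p x \<le> 1"
        then have "1 powr (1/p) < Nn n p x powr (1 / p)" using p by (intro powr_less_mono2) auto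
        then show False using a ln by simp
      qed
    qed
  qed
  then show ?thesis unfolding lp_ball_def Rn_measure_def by simp
qed

theorem lemma4p3:
  fixes d :: nat
  shows "\<exists>C>0. \<forall>(p::real) (n::nat) (\<alpha>::(nat \<Rightarrow> nat) \<Rightarrow> real).
           p \<ge> 1 \<longrightarrow> real n > 16 * (real d)\<^sup>2 \<longrightarrow>
           (\<integral>x. (hom_poly n d \<alpha> x)\<^sup>2 \<partial>(uniform_measure (Rn_measure n) (lp_ball n p)))
             \<ge> C * real n powr (- 2 * real d / p) * (coeff_d n d \<alpha>)\<^sup>2"
proof (rule exI[of _ "cd d ^ d / 16 ^ d"], intro conjI allI impI)
  show "cd d ^ d / 16 ^ d > 0" using cd_pos[of d] by simp
  fix p :: real and n :: nat and \<alpha> :: "(nat \<Rightarrow> nat) \<Rightarrow> real"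
  assume p: "p \<ge> 1" and nd: "real n > 16 * (real d)\<^sup>2"
  have p0: "p > 0" using p by simp
  have n1: "real n \<ge> 1" using nd by (cases "n = 0") auto
  have dn: "real d \<le> real n"
  proof (cases "d = 0")
    case False
    then have a: "real d \<le> (real d)\<^sup>2" by (simp add: power2_eq_square)
    have b: "0 \<le> (real d)\<^sup>2" by simp
    from a b nd show ?thesis by linarith
  qed simp
  define f where "f = hom_poly n d \<alpha>"
  define G where "G x = ennreal ((f x)\<^sup>2)" for x
  define \<beta> where "\<beta> I = (if I \<in> multi_idx n d then \<alpha> I else 0)" for I
  define c2 where "c2 = (\<Sum>I\<in>multi_idx n d. (\<alpha> I)\<^sup>2)"
  define \<Gamma>1 where "\<Gamma>1 = Gamma ((real n + real 0) / p + 1)"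
  define \<Gamma>2 where "\<Gamma>2 = Gamma ((real n + real (2 * d)) / p + 1)"
  define V where "V = Fs n p (\<lambda>_. 1) 1"
  define K where "K = (\<Sum>I\<in>multi_idx n d. \<bar>\<alpha> I\<bar>)"
  have G1: "\<Gamma>1 > 0" unfolding \<Gamma>1_def using p0 by (intro Gamma_real_pos add_nonneg_pos divide_nonneg_nonneg) auto
  have G2: "\<Gamma>2 > 0" unfolding \<Gamma>2_def using p0 by (intro Gamma_real_pos add_nonneg_pos divide_nonneg_nonneg) auto
  have Zpos: "Zp p > 0" by (rule Zp_pos[OF p])
  have fm[measurable]: "f \<in> borel_measurable (PL n)" unfolding f_def by measurable
  have Gm[measurable]: "G \<in> borel_measurable (PL n)" unfolding G_def by measurable
  have c2: "(coeff_d n d \<alpha>)\<^sup>2 = c2" unfolding coeff_d_def c2_def by (simp add: sum_nonneg)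
  have c2nn: "c2 \<ge> 0" unfolding c2_def by (simp add: sum_nonneg)
  have homG: "G (scl n t x) = ennreal (t ^ (2 * d)) * G x" if t: "t > 0" for t x
    unfolding G_def f_def hom_poly_scl[OF t] using t
    by (simp add: ennreal_mult[symmetric] power_mult_distrib power_mult[symmetric] mult.commute)
  have LCg: "(\<integral>\<^sup>+ x. G x * ennreal (exp (- Nn n p x)) \<partial>PL n) = ennreal \<Gamma>2 * Fs n p G 1"
    unfolding \<Gamma>2_def by (rule layer_cake[OF p0 Gm homG])
  have LC1: "(\<integral>\<^sup>+ x. 1 * ennreal (exp (- Nn n p x)) \<partial>PL n) = ennreal \<Gamma>1 * V"
    unfolding \<Gamma>1_def V_def by (rule layer_cake[where m=0, OF p0]) auto
  have ZV: "ennreal (Zp p ^ n) = ennreal \<Gamma>1 * V" using LC1 int_exp_Nn[OF p, of n] by simp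
  then have "V \<noteq> \<top>" using G1 by (auto simp: ennreal_mult_eq_top_iff)
  then obtain v where v: "V = ennreal v" "v \<ge> 0" by (cases V) auto
  have Zv: "Zp p ^ n = \<Gamma>1 * v" using ZV v G1 Zpos by (simp add: ennreal_mult[symmetric])
  have vpos: "v > 0" using Zv G1 Zpos v(2) by (metis less_eq_real_def mult_zero_right zero_less_power)
  have prod: "ennreal (Zp p ^ n * (cd d ^ d * c2)) \<le> (\<integral>\<^sup>+ x. G x * ennreal (exp (- Nn n p x)) \<partial>PL n)"
  proof -
    have "(\<integral>\<^sup>+ x. G x * ennreal (exp (- Nn n p x)) \<partial>PL n)
        = (\<integral>\<^sup>+ x. ennreal (Zp p ^ n) * ennreal ((ev n d \<beta> x)\<^sup>2 * (\<Prod>i<n. rho p (x i))) \<partial>PL n)"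
    proof (intro nn_integral_cong)
      fix x
      have "0 \<le> (\<Prod>i<n. rho p (x i))" using rho_nonneg[OF p] by (simp add: prod_nonneg)
      then show "G x * ennreal (exp (- Nn n p x)) = ennreal (Zp p ^ n) * ennreal ((ev n d \<beta> x)\<^sup>2 * (\<Prod>i<n. rho p (x i)))"
        unfolding G_def f_def exp_Nn[OF p] hom_poly_ev \<beta>_def[symmetric] using Zpos
        by (simp add: ennreal_mult[symmetric] mult_ac)
    qed
    also have "\<dots> = ennreal (Zp p ^ n) * (\<integral>\<^sup>+ x. ennreal ((ev n d \<beta> x)\<^sup>2 * (\<Prod>i<n. rho p (x i))) \<partial>PL n)"
      by (rule nn_integral_cmult) measurable
    also have "\<dots> \<ge> ennreal (Zp p ^ n) * ennreal (cd d ^ d * c2)"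
    proof (rule mult_left_mono)
      have "(\<Sum>I\<in>multi_idx n d. (\<beta> I)\<^sup>2) = c2" unfolding c2_def \<beta>_def by simp
      then show "ennreal (cd d ^ d * c2) \<le> (\<integral>\<^sup>+ x. ennreal ((ev n d \<beta> x)\<^sup>2 * (\<Prod>i<n. rho p (x i))) \<partial>PL n)"
        using prod_lower[OF p, of d n] by auto
    qed simp
    finally show ?thesis using Zpos cd_pos[of d] c2nn by (simp add: ennreal_mult[symmetric])
  qed
  have Fle: "Fs n p G 1 \<le> ennreal (K\<^sup>2) * V"
  proof -
    have "Fs n p G 1 \<le> (\<integral>\<^sup>+ x. ennreal (K\<^sup>2) * (1 * indicator {x. Nn n p x \<le> 1} x) \<partial>PL n)"
      unfolding Fs_def
    proof (intro nn_integral_mono)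
      fix x
      show "G x * indicator {x. Nn n p x \<le> 1} x \<le> ennreal (K\<^sup>2) * (1 * indicator {x. Nn n p x \<le> 1} x)"
      proof (cases "Nn n p x \<le> 1")
        case True
        have "\<bar>f x\<bar> \<le> K" unfolding f_def K_def by (rule hom_poly_bound[OF p True])
        then have "(f x)\<^sup>2 \<le> K\<^sup>2" using power_mono[OF _ abs_ge_zero, of "f x" K 2] by simp
        then show ?thesis using True unfolding G_def by (simp add: ennreal_leI)
      qed simp
    qed
    also have "\<dots> = ennreal (K\<^sup>2) * V" unfolding V_def Fs_def by (rule nn_integral_cmult) measurable
    finally show ?thesis .
  qed
  then have "Fs n p G 1 \<noteq> \<top>" using v by (auto simp: ennreal_mult_less_top top_unique simp flip: ennreal_mult)
  then obtain fr where fr: "Fs n p G 1 = ennreal fr" "fr \<ge> 0" by (cases "Fs n p G 1") auto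
  have key: "Zp p ^ n * (cd d ^ d * c2) \<le> \<Gamma>2 * fr"
  proof -
    have "ennreal (Zp p ^ n * (cd d ^ d * c2)) \<le> ennreal (\<Gamma>2 * fr)"
      using prod LCg fr G2 by (simp add: ennreal_mult)
    then show ?thesis using G2 fr by (simp add: ennreal_le_iff)
  qed
  have Beq: "lp_ball n p = {x \<in> space (PL n). Nn n p x \<le> 1}" by (rule lp_ball_eq[OF p])
  have Bsets[measurable]: "lp_ball n p \<in> sets (PL n)" unfolding Beq by measurable
  have RM: "Rn_measure n = PL n" unfolding Rn_measure_def ..
  have ballG: "(\<integral>\<^sup>+ x. G x * indicator (lp_ball n p) x \<partial>PL n) = Fs n p G 1"
    unfolding Fs_def Beq by (intro nn_integral_cong) (auto simp: indicator_def)
  have ballV: "emeasure (PL n) (lp_ball n p) = V"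
  proof -
    have "V = (\<integral>\<^sup>+ x. indicator (lp_ball n p) x \<partial>PL n)"
      unfolding V_def Fs_def Beq by (intro nn_integral_cong) (auto simp: indicator_def)
    also have "\<dots> = emeasure (PL n) (lp_ball n p)" by (rule nn_integral_indicator[OF Bsets])
    finally show ?thesis ..
  qed
  have fsm: "(\<lambda>x. (f x)\<^sup>2) \<in> borel_measurable (uniform_measure (PL n) (lp_ball n p))"
    by (subst measurable_cong_sets[OF sets_uniform_measure refl]) measurable
  have "(\<integral>x. (f x)\<^sup>2 \<partial>(uniform_measure (PL n) (lp_ball n p)))
      = enn2real (\<integral>\<^sup>+ x. ennreal ((f x)\<^sup>2) \<partial>(uniform_measure (PL n) (lp_ball n p)))"
    by (rule integral_eq_nn_integral[OF fsm]) simp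
  also have "(\<integral>\<^sup>+ x. ennreal ((f x)\<^sup>2) \<partial>(uniform_measure (PL n) (lp_ball n p)))
      = (\<integral>\<^sup>+ x. G x * indicator (lp_ball n p) x \<partial>PL n) / emeasure (PL n) (lp_ball n p)"
    unfolding G_def by (rule nn_integral_uniform_measure) measurable
  also have "\<dots> = ennreal (fr / v)" unfolding ballG ballV fr v using vpos fr by (simp add: divide_ennreal)
  finally have I: "(\<integral>x. (f x)\<^sup>2 \<partial>(uniform_measure (PL n) (lp_ball n p))) = fr / v"
    using vpos fr by simp
  have "cd d ^ d / 16 ^ d * real n powr (- 2 * real d / p) * c2
      = (real n powr (- 2 * real d / p) / 16 ^ d) * (cd d ^ d * c2)" by (simp add: field_simps)
  also have "\<dots> \<le> (\<Gamma>1 / \<Gamma>2) * (cd d ^ d * c2)"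
    using Gamma_ratio[OF p n1 dn] cd_pos[of d] c2nn unfolding \<Gamma>1_def \<Gamma>2_def
    by (intro mult_right_mono) auto
  also have "\<dots> = \<Gamma>1 * (Zp p ^ n * (cd d ^ d * c2)) / (\<Gamma>2 * Zp p ^ n)"
    using Zpos by (simp add: field_simps)
  also have "\<dots> \<le> \<Gamma>1 * (\<Gamma>2 * fr) / (\<Gamma>2 * Zp p ^ n)"
    using key G1 G2 Zpos by (intro divide_right_mono mult_left_mono) auto
  also have "\<dots> = fr / v" using Zv G1 G2 vpos by (simp add: field_simps)
  finally show "cd d ^ d / 16 ^ d * real n powr (- 2 * real d / p) * (coeff_d n d \<alpha>)\<^sup>2
      \<le> (\<integral>x. (hom_poly n d \<alpha> x)\<^sup>2 \<partial>(uniform_measure (Rn_measure n) (lp_ball n p)))"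
    unfolding c2 RM I[unfolded f_def] .
qed

end
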